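(* On the line ${\rm O}x$, let ${\rm A},{\rm B}$ have abscissas $0<x_{\rm B}<x_{\rm A}$ and let $v_E=\sqrt{2/x_{\rm A}}$. For each initial velocity $v_{\rm A}\in\,]-\infty,v_E[$, the rectilinear solution of $\ddot x=-1/x^2$ with $x(t_{\rm A})=x_{\rm A}$, $\dot x(t_{\rm A})=v_{\rm A}$ reaches ${\rm B}$ before any collision with ${\rm O}$ (after culminating if $v_{\rm A}\ge0$); let $T_D^R(v_{\rm A})>0$ be the first time after $t_{\rm A}$, minus $t_{\rm A}$, at which it is at ${\rm B}$. The direct Keplerian arcs from ${\rm A}$ to ${\rm B}$ are exactly these arcs, parametrized by $v_{\rm A}\in\,]-\infty,v_E[$. The function $T_D^R$ is increasing with ${\rm d}T_D^R/{\rm d}v_{\rm A}>0$ everywhere, $T_D^R(v_{\rm A})\to0$ as $v_{\rm A}\to-\infty$ and $T_D^R(v_{\rm A})\to+\infty$ as $v_{\rm A}\to v_E^-$.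
   Context: Units are normalized so that the Kepler problem with fixed center ${\rm O}$ (origin) is $\ddot q=-q/|q|^3$; on a line through ${\rm O}$ with $x>0$ it reads $\ddot x=-1/x^2$. A Keplerian arc from ${\rm A}$ to ${\rm B}$ is a solution on a compact time interval $[t_{\rm A},t_{\rm B}]$ with $q(t_{\rm A})={\rm A}$, $q(t_{\rm B})={\rm B}$; its elapsed time is $t_{\rm B}-t_{\rm A}$. Rectilinear motions are extended after collision with ${\rm O}$ (the body bounces back along the same ray, keeping the same energy). An arc is indirect if its convex hull contains ${\rm O}$ and direct otherwise; for rectilinear arcs, direct means no collision with ${\rm O}$ occurs. *)

theory Defs
  imports "HOL-Analysis.Analysis"
begin

definition line_sol :: "(real \<Rightarrow> real) \<Rightarrow> (real \<Rightarrow> real) \<Rightarrow> real \<Rightarrow> real \<Rightarrow> bool" where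
  "line_sol x v a b \<longleftrightarrow> a \<le> b \<and>
     (\<forall>t\<in>{a..b}. 0 < x t \<and>
        (x has_real_derivative v t) (at t within {a..b}) \<and>
        (v has_real_derivative (- 1 / (x t)\<^sup>2)) (at t within {a..b}))"

text \<open>T_D^R(vA): the first time (after t_A = 0, the problem being autonomous) at which the
  rectilinear solution starting at xA with velocity vA is at xB, before any collision.\<close>
definition T_DR :: "real \<Rightarrow> real \<Rightarrow> real \<Rightarrow> real" where
  "T_DR xA xB vA = Inf {T. 0 < T \<and> (\<exists>x v. line_sol x v 0 T \<and> x 0 = xA \<and> v 0 = vA \<and> x T = xB)}"

definition kepler_sol :: "(real \<Rightarrow> 'a::euclidean_space) \<Rightarrow> (real \<Rightarrow> 'a) \<Rightarrow> real \<Rightarrow> real \<Rightarrow> bool" where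
  "kepler_sol q p a b \<longleftrightarrow> a \<le> b \<and>
     (\<forall>t\<in>{a..b}. q t \<noteq> 0 \<and>
        (q has_vector_derivative p t) (at t within {a..b}) \<and>
        (p has_vector_derivative (- (1 / norm (q t) ^ 3)) *\<^sub>R q t) (at t within {a..b}))"

definition direct_arc :: "(real \<Rightarrow> 'a::euclidean_space) \<Rightarrow> real \<Rightarrow> real \<Rightarrow> bool" where
  "direct_arc q a b \<longleftrightarrow> 0 \<notin> convex hull (q ` {a..b})"

end

theory Submission
  imports Defs
begin

definition cc :: "nat \<Rightarrow> real \<Rightarrow> real" where
  "cc n z = (\<Sum>k. z^k / fact (2*k+n))"

lemma cc_summable: "summable (\<lambda>k. z^k / fact (2*k+n) :: real)"
proof (rule summable_comparison_test[OF _ summable_exp[of "\<bar>z\<bar>"]])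
  show "\<exists>N. \<forall>k\<ge>N. norm (z^k / fact (2*k+n)) \<le> inverse (fact k) * \<bar>z\<bar>^k"
  proof (intro exI allI impI)
    fix k :: nat
    have "fact k \<le> (fact (2*k+n) :: real)" by (rule fact_mono) auto
    hence "\<bar>z\<bar>^k / fact (2*k+n) \<le> \<bar>z\<bar>^k / fact k"
      by (intro divide_left_mono) auto
    thus "norm (z^k / fact (2*k+n)) \<le> inverse (fact k) * \<bar>z\<bar>^k"
      by (simp add: power_abs field_simps)
  qed
qed

lemma cc_sums: "(\<lambda>k. z^k / fact (2*k+n)) sums cc n z"
  unfolding cc_def using cc_summable summable_sums by blast

lemma cc_rec: "cc n z = 1 / fact n + z * cc (n+2) z"
proof -
  have "(\<lambda>k. z^(Suc k) / fact (2*(Suc k)+n)) sums (cc n z - z^0 / fact (2*0+n))"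
    using sums_Suc_iff[of "\<lambda>k. z^k / fact (2*k+n)"] cc_sums[of z n] by simp
  moreover have "(\<lambda>k. z^(Suc k) / fact (2*(Suc k)+n)) = (\<lambda>k. z * (z^k / fact (2*k+(n+2))))"
    by (auto simp: algebra_simps)
  moreover have "(\<lambda>k. z * (z^k / fact (2*k+(n+2)))) sums (z * cc (n+2) z)"
    by (rule sums_mult[OF cc_sums])
  ultimately show ?thesis using sums_unique2 by fastforce
qed

lemma cc_aux:
  fixes k n D F Z :: real
  assumes "D = 2*k+n+2" "F > 0" "k \<ge> 0" "n \<ge> 0"
  shows "(k + 1) * (1 / (D * F)) * Z = (Z / F - n * (Z / (D * F))) / 2"
proof -
  have D: "D > 0" using assms by simp
  have "Z / F - n * (Z / (D * F)) = (D - n) * Z / (D*F)"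
    using D assms(2) by (simp add: field_simps)
  also have "D - n = 2 * (k+1)" using assms(1) by simp
  finally have "Z / F - n * (Z / (D * F)) = 2 * ((k+1) * Z / (D*F))" by simp
  thus ?thesis by simp
qed

lemma cc_deriv: "(cc n has_real_derivative ((cc (n+1) z - real n * cc (n+2) z) / 2)) (at z)"
proof -
  let ?c = "\<lambda>k. 1 / fact (2*k+n) :: real"
  have eq: "cc n = (\<lambda>z. \<Sum>k. ?c k * z^k)" unfolding cc_def by auto
  have sm: "summable (\<lambda>k. ?c k * y^k)" for y
    using cc_summable[of y n] by simp
  have D1: "((\<lambda>z. \<Sum>k. ?c k * z^k) has_real_derivative (\<Sum>k. diffs ?c k * z^k)) (at z)"
    by (rule termdiffs_strong_converges_everywhere[OF sm])
  have D2: "(\<lambda>k. diffs ?c k * z^k) sums ((cc (n+1) z - real n * cc (n+2) z) / 2)"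
  proof -
    have s: "(\<lambda>k. (z^k / fact (2*k+(n+1)) - real n * (z^k / fact (2*k+(n+2)))) / 2) sums ((cc (n+1) z - real n * cc (n+2) z) / 2)"
      by (intro sums_divide sums_diff sums_mult cc_sums)
    have "diffs ?c k * z^k = (z^k / fact (2*k+(n+1)) - real n * (z^k / fact (2*k+(n+2)))) / 2" for k
    proof -
      define F :: real where "F = fact (2*k+(n+1))"
      define D :: real where "D = real (2*k+n+2)"
      have f: "fact (2*k+(n+2)) = D * F"
      proof -
        have e: "2*k+(n+2) = Suc (2*k+(n+1))" by simp
        have "fact (2*k+(n+2)) = of_nat (Suc (2*k+(n+1))) * (fact (2*k+(n+1)) :: real)"
          unfolding e by (rule fact_Suc)
        thus ?thesis unfolding D_def F_def by simp
      qed
      have f2: "fact (2 * Suc k + n) = (fact (2*k+(n+2)) :: real)" by (simp add: algebra_simps)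
      have "diffs ?c k * z^k = real (Suc k) * (1 / (D * F)) * z^k"
        unfolding diffs_def f2 f by simp
      also have "\<dots> = (real k + 1) * (1 / (D * F)) * z^k" by simp
      also have "\<dots> = (z^k / F - real n * (z^k / (D * F))) / 2"
        by (rule cc_aux) (simp_all add: D_def F_def)
      also have "\<dots> = (z^k / fact (2*k+(n+1)) - real n * (z^k / fact (2*k+(n+2)))) / 2"
        unfolding f F_def by simp
      finally show ?thesis .
    qed
    hence "(\<lambda>k. diffs ?c k * z^k) = (\<lambda>k. (z^k / fact (2*k+(n+1)) - real n * (z^k / fact (2*k+(n+2)))) / 2)"
      by (rule ext)
    thus ?thesis using s by simp
  qed
  show ?thesis unfolding eq using D1 unfolding sums_unique[OF D2, symmetric] .
qed

definition G :: "nat \<Rightarrow> real \<Rightarrow> real \<Rightarrow> real" where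
  "G n al s = s^n * cc n (al * s^2)"

lemma G_rec: "G n al s = s^n / fact n + al * G (n+2) al s"
  unfolding G_def by (subst cc_rec) (simp add: algebra_simps power2_eq_square)

lemma G_zero: "G 0 al 0 = 1" "G (Suc n) al 0 = 0"
  unfolding G_def by (subst cc_rec, simp)+

lemma cc_chain: "((\<lambda>s. cc n (al * s^2)) has_real_derivative
   ((cc (n+1) (al * s^2) - real n * cc (n+2) (al * s^2)) / 2) * (al * (2 * s))) (at s)"
proof -
  have "((\<lambda>s. al * s^2) has_real_derivative al * (2 * s)) (at s)"
    by (auto intro!: derivative_eq_intros)
  from DERIV_chain2[OF cc_deriv this] show ?thesis .
qed

lemma G_ds0: "((\<lambda>s. G 0 al s) has_real_derivative al * G 1 al s) (at s)"
proof -
  have d: "((\<lambda>s. cc 0 (al * s^2)) has_real_derivative cc 1 (al * s^2) * (al * s)) (at s)"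
    using cc_chain[of 0 al s] by simp
  have "((\<lambda>s. cc 0 (al * s^2)) has_real_derivative al * (s * cc 1 (al * s^2))) (at s)"
    by (rule DERIV_cong[OF d]) (simp add: algebra_simps)
  thus ?thesis by (simp add: G_def)
qed

lemma G_alg:
  fixes m F1 c1 c2 c3 z al s :: real
  assumes "c1 = F1 + z * c3" "z = al * s^2"
  shows "(m * s^n) * c1 + s^(Suc n) * (((c2 - m * c3) / 2) * (al * (2 * s)))
     = s^n * (m * F1) + s^n * (z * c2)"
  unfolding assms by (simp add: field_simps power2_eq_square)

lemma G_ds: "((\<lambda>s. G (Suc n) al s) has_real_derivative G n al s) (at s)"
proof -
  have p: "((\<lambda>s. s^(Suc n)) has_real_derivative real (Suc n) * s^n) (at s)"
    using DERIV_pow[of "Suc n" s] by simp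
  define z where "z = al * s^2"
  have d: "((\<lambda>s. s^(Suc n) * cc (Suc n) (al * s^2)) has_real_derivative
     (real (Suc n) * s^n) * cc (Suc n) z + s^(Suc n) * (((cc (Suc n+1) z - real (Suc n) * cc (Suc n+2) z) / 2) * (al * (2 * s)))) (at s)"
    using DERIV_mult[OF p cc_chain[of "Suc n" al s]] unfolding z_def by (simp add: algebra_simps)
  have e1: "cc (Suc n) z = 1 / fact (Suc n) + z * cc (Suc n + 2) z" by (rule cc_rec)
  have e2: "cc n z = 1 / fact n + z * cc (n + 2) z" by (rule cc_rec)
  have fs: "real (Suc n) * (1 / fact (Suc n)) = 1 / (fact n :: real)"
    by (simp add: fact_Suc del: of_nat_Suc)
  have "(real (Suc n) * s^n) * cc (Suc n) z + s^(Suc n) * (((cc (Suc n+1) z - real (Suc n) * cc (Suc n+2) z) / 2) * (al * (2 * s)))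
        = s^n * (real (Suc n) * (1 / fact (Suc n))) + s^n * (z * cc (Suc n + 1) z)"
    by (rule G_alg[OF e1 z_def])
  also have "\<dots> = s^n * cc n z" unfolding fs e2 by (simp add: algebra_simps)
  finally show ?thesis using d unfolding G_def z_def by simp
qed

lemma G_dal: "((\<lambda>al. G n al s) has_real_derivative (s * G (n+1) al s - real n * G (n+2) al s) / 2) (at al)"
proof -
  have "((\<lambda>al. al * s^2) has_real_derivative s^2) (at al)"
    by (auto intro!: derivative_eq_intros)
  from DERIV_chain2[OF cc_deriv this]
  have "((\<lambda>al. s^n * cc n (al * s^2)) has_real_derivative s^n * (((cc (n+1) (al * s^2) - real n * cc (n+2) (al * s^2)) / 2) * s^2)) (at al)"
    by (rule DERIV_cmult)
  thus ?thesis unfolding G_def by (simp add: field_simps power2_eq_square)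
qed

lemma cc_cont: "isCont (cc n) z"
  using cc_deriv DERIV_isCont by blast

lemma G_cont: "continuous_on UNIV (\<lambda>z. G n (f z) (g z))" if "continuous_on UNIV f" "continuous_on UNIV g"
  for f g :: "'a::topological_space \<Rightarrow> real"
  unfolding G_def
  by (intro continuous_intros that continuous_on_compose2[OF continuous_at_imp_continuous_on[OF ballI[OF cc_cont]]]) auto

lemma G_dsc: "((\<lambda>s. G (Suc n) al s) has_real_derivative G n al s) (at s within S)"
  using G_ds has_field_derivative_at_within by blast

lemma G0_d[derivative_intros]: "(f has_real_derivative f') (at x within S) \<Longrightarrow>
  ((\<lambda>x. G 0 al (f x)) has_real_derivative (al * G 1 al (f x)) * f') (at x within S)"
  by (rule DERIV_chain2[OF G_ds0])
lemma G1_d[derivative_intros]: "(f has_real_derivative f') (at x within S) \<Longrightarrow>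
  ((\<lambda>x. G 1 al (f x)) has_real_derivative G 0 al (f x) * f') (at x within S)"
  using DERIV_chain2[OF G_ds[of 0]] by simp
lemma G2_d[derivative_intros]: "(f has_real_derivative f') (at x within S) \<Longrightarrow>
  ((\<lambda>x. G 2 al (f x)) has_real_derivative G 1 al (f x) * f') (at x within S)"
  using DERIV_chain2[OF G_ds[of 1]] by (simp add: numeral_2_eq_2)
lemma G3_d[derivative_intros]: "(f has_real_derivative f') (at x within S) \<Longrightarrow>
  ((\<lambda>x. G 3 al (f x)) has_real_derivative G 2 al (f x) * f') (at x within S)"
  using DERIV_chain2[OF G_ds[of 2]] by (simp add: numeral_3_eq_3)
lemma G4_d[derivative_intros]: "(f has_real_derivative f') (at x within S) \<Longrightarrow>
  ((\<lambda>x. G 4 al (f x)) has_real_derivative G 3 al (f x) * f') (at x within S)"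
  using DERIV_chain2[OF G_ds[of 3]] by (simp add: eval_nat_numeral)
lemma G5_d[derivative_intros]: "(f has_real_derivative f') (at x within S) \<Longrightarrow>
  ((\<lambda>x. G 5 al (f x)) has_real_derivative G 4 al (f x) * f') (at x within S)"
  using DERIV_chain2[OF G_ds[of 4]] by (simp add: eval_nat_numeral)

lemma G0_p[derivative_intros]: "(G 0 al has_real_derivative al * G 1 al s) (at s within S)"
  using G0_d[OF DERIV_ident] by simp
lemma G1_p[derivative_intros]: "(G 1 al has_real_derivative G 0 al s) (at s within S)"
  using G1_d[OF DERIV_ident] by simp
lemma G2_p[derivative_intros]: "(G 2 al has_real_derivative G 1 al s) (at s within S)"
  using G2_d[OF DERIV_ident] by simp
lemma G3_p[derivative_intros]: "(G 3 al has_real_derivative G 2 al s) (at s within S)"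
  using G3_d[OF DERIV_ident] by simp
lemma G4_p[derivative_intros]: "(G 4 al has_real_derivative G 3 al s) (at s within S)"
  using G4_d[OF DERIV_ident] by simp
lemma G5_p[derivative_intros]: "(G 5 al has_real_derivative G 4 al s) (at s within S)"
  using G5_d[OF DERIV_ident] by simp

lemma Gal_d[derivative_intros]: "(g has_real_derivative g') (at x within S) \<Longrightarrow>
  ((\<lambda>x. G n (g x) s) has_real_derivative ((s * G (n+1) (g x) s - real n * G (n+2) (g x) s) / 2) * g') (at x within S)"
  by (rule DERIV_chain2[OF G_dal])

lemma G_rec0: "G 0 al s = 1 + al * G 2 al s" using G_rec[of 0] by (simp add: numeral_2_eq_2)
lemma G_rec1: "G 1 al s = s + al * G 3 al s" using G_rec[of 1] by (simp add: numeral_3_eq_3)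
lemma G_rec2: "G 2 al s = s^2/2 + al * G 4 al s" using G_rec[of 2] by simp
lemma G_rec3: "G 3 al s = s^3/6 + al * G 5 al s" using G_rec[of 3] by (simp add: fact_numeral)

lemma Gnum: "G (Suc 0) = G 1" "G (Suc (Suc 0)) = G 2" "G (Suc (Suc (Suc 0))) = G 3"
  "G (Suc (Suc (Suc (Suc 0)))) = G 4" "G (Suc (Suc (Suc (Suc (Suc 0))))) = G 5"
  by (simp_all add: eval_nat_numeral)
locale kep =
  fixes xA xB :: real
  assumes xB_pos: "0 < xB" and xBA: "xB < xA"
begin

lemma xA_pos: "0 < xA" using xB_pos xBA by simp

definition al :: "real \<Rightarrow> real" where "al a = a^2 - 2 / xA"

definition X :: "real \<Rightarrow> real \<Rightarrow> real" where
  "X a s = xA * G 0 (al a) s + xA * a * G 1 (al a) s + G 2 (al a) s"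
definition X1 :: "real \<Rightarrow> real \<Rightarrow> real" where
  "X1 a s = xA * al a * G 1 (al a) s + xA * a * G 0 (al a) s + G 1 (al a) s"
definition Th :: "real \<Rightarrow> real \<Rightarrow> real" where
  "Th a s = xA * G 1 (al a) s + xA * a * G 2 (al a) s + G 3 (al a) s"
definition P :: "real \<Rightarrow> real \<Rightarrow> real" where
  "P a s = xA * a * s * G 1 (al a) s + xA * G 1 (al a) s + xA * a^2 * (s * G 2 (al a) s - G 3 (al a) s)
     + a * (s * G 3 (al a) s - 2 * G 4 (al a) s)"
definition Q :: "real \<Rightarrow> real \<Rightarrow> real" where
  "Q a s = xA * a * (s * G 2 (al a) s - G 3 (al a) s) + xA * G 2 (al a) s
     + xA * a^2 * (s * G 3 (al a) s - 2 * G 4 (al a) s) + a * (s * G 4 (al a) s - 3 * G 5 (al a) s)"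
definition P1 :: "real \<Rightarrow> real \<Rightarrow> real" where
  "P1 a s = xA * a * G 1 (al a) s + xA * a * s * G 0 (al a) s + xA * G 0 (al a) s
     + xA * a^2 * s * G 1 (al a) s + a * (s * G 2 (al a) s - G 3 (al a) s)"

lemma X_ds: "((X a) has_real_derivative X1 a s) (at s within S)"
  unfolding X_def X1_def
  apply (rule DERIV_cong)
  apply (rule derivative_intros )+
  apply (simp add: algebra_simps del: One_nat_def)
  done

lemma X1_ds: "((X1 a) has_real_derivative al a * X a s + 1) (at s within S)"
  unfolding X_def X1_def
  apply (rule DERIV_cong)
  apply (rule derivative_intros )+
  apply (simp add: algebra_simps G_rec0 del: One_nat_def)
  done

lemma Th_ds: "((Th a) has_real_derivative X a s) (at s within S)"
  unfolding X_def Th_def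
  apply (rule DERIV_cong)
  apply (rule derivative_intros )+
  apply (simp add: algebra_simps del: One_nat_def)
  done

lemma P_ds: "((P a) has_real_derivative P1 a s) (at s within S)"
  unfolding P_def P1_def
  apply (rule DERIV_cong)
  apply (rule derivative_intros )+
  apply (simp add: algebra_simps del: One_nat_def)
  done

lemma Q_ds: "((Q a) has_real_derivative P a s) (at s within S)"
  unfolding P_def Q_def
  apply (rule DERIV_cong)
  apply (rule derivative_intros )+
  apply (simp add: algebra_simps del: One_nat_def)
  done

lemma P1_ds: "((P1 a) has_real_derivative al a * P a s + 2 * a * X a s) (at s within S)"
  unfolding P_def P1_def X_def
  apply (rule DERIV_cong)
  apply (rule derivative_intros )+
  apply (simp add: field_simps G_rec0 G_rec1 G_rec2 G_rec3 power2_eq_square power3_eq_cube del: One_nat_def)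
  done

lemma al_d: "(al has_real_derivative 2 * a) (at a within S)"
  unfolding al_def by (rule derivative_eq_intros refl | simp)+

lemma X_da: "((\<lambda>a. X a s) has_real_derivative P a s) (at a within S)"
  unfolding X_def P_def
  apply (rule DERIV_cong)
  apply (rule derivative_intros al_d )+
  apply (simp add: field_simps power2_eq_square del: One_nat_def)
  done

lemma Th_da: "((\<lambda>a. Th a s) has_real_derivative Q a s) (at a within S)"
  unfolding Th_def Q_def
  apply (rule DERIV_cong)
  apply (rule derivative_intros al_d )+
  apply (simp add: field_simps power2_eq_square del: One_nat_def)
  done

end

context kep begin

lemma G0s: "G 0 c 0 = 1" "G 1 c 0 = 0" "G 2 c 0 = 0" "G 3 c 0 = 0" "G 4 c 0 = 0" "G 5 c 0 = 0"
  using G_zero by (simp_all add: G_def)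

lemma vals0: "X a 0 = xA" "X1 a 0 = xA * a" "Th a 0 = 0" "P a 0 = 0" "P1 a 0 = xA" "Q a 0 = 0"
  unfolding X_def X1_def Th_def P_def P1_def Q_def by (simp_all add: G0s G_zero)

lemma X_dsa: "((X a) has_real_derivative X1 a s) (at s)" using X_ds[of a s UNIV] by simp
lemma X1_dsa: "((X1 a) has_real_derivative al a * X a s + 1) (at s)" using X1_ds[of a s UNIV] by simp
lemma Th_dsa: "((Th a) has_real_derivative X a s) (at s)" using Th_ds[of a s UNIV] by simp
lemma P_dsa: "((P a) has_real_derivative P1 a s) (at s)" using P_ds[of a s UNIV] by simp
lemma P1_dsa: "((P1 a) has_real_derivative al a * P a s + 2 * a * X a s) (at s)" using P1_ds[of a s UNIV] by simp
lemma Q_dsa: "((Q a) has_real_derivative P a s) (at s)" using Q_ds[of a s UNIV] by simp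

lemma energy: "(X1 a s)^2 = al a * (X a s)^2 + 2 * X a s"
proof -
  let ?f = "\<lambda>s. (X1 a s)^2 - al a * (X a s)^2 - 2 * X a s"
  have "\<forall>s. (?f has_real_derivative 0) (at s)"
  proof
    fix s
    show "(?f has_real_derivative 0) (at s)"
      apply (rule DERIV_cong)
       apply (rule derivative_intros X_dsa X1_dsa)+
      apply (simp add: algebra_simps)
      done
  qed
  hence "?f s = ?f 0" by (rule DERIV_isconst_all)
  also have "?f 0 = 0" by (simp add: vals0 al_def power2_eq_square field_simps)
  finally show ?thesis by simp
qed

lemma lin_energy: "X1 a s * P1 a s = a * (X a s)^2 + al a * X a s * P a s + P a s"
proof -
  let ?f = "\<lambda>s. X1 a s * P1 a s - a * (X a s)^2 - al a * X a s * P a s - P a s"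
  have "\<forall>s. (?f has_real_derivative 0) (at s)"
  proof
    fix s
    show "(?f has_real_derivative 0) (at s)"
      apply (rule DERIV_cong)
       apply (rule derivative_intros X_dsa X1_dsa P_dsa P1_dsa)+
      apply (simp add: algebra_simps)
      done
  qed
  hence "?f s = ?f 0" by (rule DERIV_isconst_all)
  also have "?f 0 = 0" by (simp add: vals0 al_def power2_eq_square field_simps)
  finally show ?thesis by simp
qed

lemma al_cont: "continuous_on UNIV (\<lambda>z. al (fst z))"
  unfolding al_def by (intro continuous_intros)

lemma cont_X: "continuous_on UNIV (\<lambda>z. X (fst z) (snd z))"
  unfolding X_def by (intro continuous_intros G_cont al_cont)
lemma cont_X1: "continuous_on UNIV (\<lambda>z. X1 (fst z) (snd z))"
  unfolding X1_def by (intro continuous_intros G_cont al_cont)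
lemma cont_Th: "continuous_on UNIV (\<lambda>z. Th (fst z) (snd z))"
  unfolding Th_def by (intro continuous_intros G_cont al_cont)
lemma cont_P: "continuous_on UNIV (\<lambda>z. P (fst z) (snd z))"
  unfolding P_def by (intro continuous_intros G_cont al_cont)
lemma cont_Q: "continuous_on UNIV (\<lambda>z. Q (fst z) (snd z))"
  unfolding Q_def by (intro continuous_intros G_cont al_cont)

end

context kep begin

definition vE :: real where "vE = sqrt (2 / xA)"

lemma vE_pos: "0 < vE" unfolding vE_def using xA_pos by simp
lemma vE_sq: "vE^2 = 2 / xA" unfolding vE_def using xA_pos by simp

lemma V_deriv:
  assumes "X a s \<noteq> 0"
  shows "((\<lambda>s. X1 a s / X a s) has_real_derivative - 1 / X a s) (at s)"
proof -
  have "((\<lambda>s. X1 a s / X a s) has_real_derivative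
     ((al a * X a s + 1) * X a s - X1 a s * X1 a s) / (X a s * X a s)) (at s)"
    using DERIV_divide[OF X1_dsa X_dsa assms] by simp
  moreover have "((al a * X a s + 1) * X a s - X1 a s * X1 a s) / (X a s * X a s) = - 1 / X a s"
    using assms energy[of a s] by (simp add: field_simps power2_eq_square)
  ultimately show ?thesis by simp
qed

lemma V_sq: "X a s \<noteq> 0 \<Longrightarrow> (X1 a s / X a s)^2 = al a + 2 / X a s"
  using energy[of a s] by (simp add: field_simps power2_eq_square)

lemma nonincr:
  fixes f f' :: "real \<Rightarrow> real"
  assumes "a \<le> b" "\<And>x. a \<le> x \<Longrightarrow> x \<le> b \<Longrightarrow> (f has_real_derivative f' x) (at x)"
    "\<And>x. a \<le> x \<Longrightarrow> x \<le> b \<Longrightarrow> f' x \<le> 0"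
  shows "f b \<le> f a"
  using DERIV_nonpos_imp_nonincreasing[of a b f] assms by blast

lemma hit_exists:
  assumes "a < vE"
  shows "\<exists>s>0. X a s \<le> xB"
proof (rule ccontr)
  assume "\<not> ?thesis"
  hence H: "\<And>s. 0 \<le> s \<Longrightarrow> xB < X a s"
    using vals0(1)[of a] xBA by (metis not_le order_le_less)
  have Xpos: "\<And>s. 0 \<le> s \<Longrightarrow> 0 < X a s" using H xB_pos less_trans by blast
  have Vd: "\<And>s. 0 \<le> s \<Longrightarrow> ((\<lambda>s. X1 a s / X a s) has_real_derivative - 1 / X a s) (at s)"
    using V_deriv Xpos by (metis less_irrefl)
  have V0: "X1 a 0 / X a 0 = a" using vals0 xA_pos by simp
  show False
  proof (cases "al a < 0")
    case True
    define M where "M = - 2 / al a"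
    have Mpos: "M > 0" unfolding M_def using True by (simp add: field_simps)
    have XM: "X a s \<le> M" if "0 \<le> s" for s
    proof -
      have "0 \<le> X a s * (al a * X a s + 2)"
        using energy[of a s] by (metis power2_eq_square zero_le_power2 distrib_left mult.assoc mult.commute)
      hence "0 \<le> al a * X a s + 2" using Xpos[OF that] by (simp add: zero_le_mult_iff)
      thus ?thesis unfolding M_def using True by (simp add: field_simps)
    qed
    have Vb: "X1 a s / X a s \<le> a - s / M" if "0 \<le> s" for s
    proof -
      have "(\<lambda>s. X1 a s / X a s + s / M) s \<le> (\<lambda>s. X1 a s / X a s + s / M) 0"
      proof (rule nonincr[OF that])
        fix x assume x: "0 \<le> x" "x \<le> s"
        have dM: "((\<lambda>s. s / M) has_real_derivative 1 / M) (at x)"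
          using Mpos by (auto intro!: derivative_eq_intros)
        show "((\<lambda>s. X1 a s / X a s + s / M) has_real_derivative - 1 / X a x + 1 / M) (at x)"
          by (rule DERIV_add[OF Vd[OF x(1)] dM])
        have "1 / M \<le> 1 / X a x" using XM[OF x(1)] Xpos[OF x(1)] by (simp add: frac_le)
        thus "- 1 / X a x + 1 / M \<le> 0" by simp
      qed
      thus ?thesis using V0 by simp
    qed
    define K where "K = 1 + 2 / xB"
    have K1: "K > 1" "K > 2 / xB" unfolding K_def using xB_pos by auto
    define s0 where "s0 = M * max 0 (a + K)"
    have s0: "0 \<le> s0" unfolding s0_def using Mpos by simp
    have "X1 a s0 / X a s0 \<le> a - s0 / M" by (rule Vb[OF s0])
    also have "a - s0 / M \<le> - K" unfolding s0_def using Mpos by auto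
    finally have "X1 a s0 / X a s0 \<le> - K" .
    hence "K^2 \<le> (X1 a s0 / X a s0)^2" using K1
      by (metis abs_le_square_iff abs_of_pos le_minus_iff less_trans zero_less_one abs_ge_minus_self order_trans)
    also have "\<dots> = al a + 2 / X a s0" using V_sq Xpos[OF s0] by simp
    also have "\<dots> < 2 / xB"
    proof -
      have "2 / X a s0 < 2 / xB" using H[OF s0] xB_pos by (intro divide_strict_left_mono) auto
      thus ?thesis using True by linarith
    qed
    finally have "K^2 < 2 / xB" .
    moreover have "K < K^2" using K1 by (simp add: power2_eq_square)
    ultimately show False using K1 by linarith
  next
    case False
    have aneg: "a < 0"
    proof (rule ccontr)
      assume "\<not> a < 0"
      hence "0 \<le> a" by simp
      hence "a^2 < vE^2" using assms by (simp add: power_strict_mono)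
      thus False using False unfolding vE_sq al_def by simp
    qed
    have Va: "X1 a s / X a s \<le> a" if "0 \<le> s" for s
    proof -
      have "(\<lambda>s. X1 a s / X a s) s \<le> (\<lambda>s. X1 a s / X a s) 0"
      proof (rule nonincr[OF that])
        fix x assume x: "0 \<le> x" "x \<le> s"
        show "((\<lambda>s. X1 a s / X a s) has_real_derivative - 1 / X a x) (at x)" by (rule Vd[OF x(1)])
        show "- 1 / X a x \<le> 0" using Xpos[OF x(1)] by simp
      qed
      thus ?thesis using V0 by simp
    qed
    define s1 where "s1 = (xA - xB) / (xB * (- a))"
    have d: "0 < xB * (- a)" using aneg xB_pos by (simp add: mult_pos_neg)
    have s1: "0 \<le> s1" unfolding s1_def by (intro divide_nonneg_pos) (use xBA d in auto)
    have "(\<lambda>s. X a s - a * xB * s) s1 \<le> (\<lambda>s. X a s - a * xB * s) 0"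
    proof (rule nonincr[OF s1])
      fix x assume x: "0 \<le> x" "x \<le> s1"
      show "((\<lambda>s. X a s - a * xB * s) has_real_derivative X1 a x - a * xB) (at x)"
        by (auto intro!: derivative_eq_intros X_dsa)
      have "X1 a x = X a x * (X1 a x / X a x)" using Xpos[OF x(1)] by simp
      also have "\<dots> \<le> X a x * a" by (rule mult_left_mono) (use Va[OF x(1)] Xpos[OF x(1)] in auto)
      also have "\<dots> \<le> xB * a" using H[OF x(1)] aneg by (simp add: mult_right_mono_neg)
      finally show "X1 a x - a * xB \<le> 0" by (simp add: mult.commute)
    qed
    hence "X a s1 \<le> xA + a * xB * s1" using vals0 by simp
    also have "a * xB * s1 = - (xA - xB)" unfolding s1_def using aneg xB_pos by (simp add: field_simps)
    finally have "X a s1 \<le> xB" by simp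
    thus False using H[OF s1] by simp
  qed
qed

end

lemma pos_nbhd:
  fixes f :: "real \<Rightarrow> real"
  assumes "isCont f x" "c < f x"
  shows "\<exists>d>0. \<forall>y. \<bar>y - x\<bar> < d \<longrightarrow> c < f y"
proof -
  have "eventually (\<lambda>y. c < f y) (at x)"
    using order_tendstoD(1)[OF assms(1)[unfolded isCont_def] assms(2)] .
  then obtain d where d: "d > 0" "\<And>y. y \<noteq> x \<Longrightarrow> dist y x < d \<Longrightarrow> c < f y"
    unfolding eventually_at by auto
  show ?thesis
  proof (intro exI[of _ d] conjI allI impI)
    fix y assume "\<bar>y - x\<bar> < d"
    thus "c < f y" using d assms(2) by (cases "y = x") (auto simp: dist_real_def)
  qed (rule d(1))
qed

context kep begin

lemma X_cont: "continuous_on UNIV (X a)"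
  by (rule continuous_at_imp_continuous_on) (use DERIV_isCont[OF X_dsa] in blast)
lemma X_isCont: "isCont (X a) s" using DERIV_isCont[OF X_dsa] .
lemma X1_isCont: "isCont (X1 a) s" using DERIV_isCont[OF X1_dsa] .
lemma Th_isCont: "isCont (Th a) s" using DERIV_isCont[OF Th_dsa] .

lemma hit_ex:
  assumes "a < vE"
  shows "\<exists>s. 0 < s \<and> X a s = xB \<and> (\<forall>u. 0 \<le> u \<and> u < s \<longrightarrow> xB < X a u)"
proof -
  define Z where "Z = {s. 0 \<le> s \<and> X a s \<le> xB}"
  obtain s0 where s0: "s0 > 0" "X a s0 \<le> xB" using hit_exists[OF assms] by blast
  have "s0 \<in> Z" unfolding Z_def using s0 by simp
  hence ne: "Z \<noteq> {}" by blast
  have bdd: "bdd_below Z" unfolding Z_def by (rule bdd_belowI[of _ 0]) auto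
  have cl: "closed Z"
  proof -
    have "closed ({s. 0 \<le> s} \<inter> {s. X a s \<le> xB})"
      by (intro closed_Int closed_Collect_le continuous_intros X_cont)
    moreover have "Z = {s. 0 \<le> s} \<inter> {s. X a s \<le> xB}" unfolding Z_def by auto
    ultimately show ?thesis by simp
  qed
  define s1 where "s1 = Inf Z"
  have s1Z: "s1 \<in> Z" unfolding s1_def by (rule closed_contains_Inf[OF ne bdd cl])
  have above: "xB < X a u" if "0 \<le> u" "u < s1" for u
  proof (rule ccontr)
    assume "\<not> xB < X a u"
    hence "u \<in> Z" unfolding Z_def using that by auto
    hence "s1 \<le> u" unfolding s1_def by (rule cInf_lower[OF _ bdd])
    thus False using that by simp
  qed
  have s1pos: "0 < s1"
  proof -
    have "s1 \<noteq> 0" using s1Z vals0(1)[of a] xBA unfolding Z_def by auto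
    thus ?thesis using s1Z unfolding Z_def by auto
  qed
  have "X a s1 = xB"
  proof (rule ccontr)
    assume "X a s1 \<noteq> xB"
    hence lt: "X a s1 < xB" using s1Z unfolding Z_def by auto
    have cc: "\<forall>x. 0 \<le> x \<and> x \<le> s1 \<longrightarrow> isCont (X a) x" using X_isCont by blast
    have "xB \<le> X a 0" using vals0(1)[of a] xBA by simp
    then obtain u where u: "0 \<le> u" "u \<le> s1" "X a u = xB"
      using IVT2[OF less_imp_le[OF lt] _ less_imp_le[OF s1pos] cc] by blast
    have "u \<noteq> s1" using u lt by auto
    thus False using above[of u] u by auto
  qed
  thus ?thesis using s1pos above by blast
qed

definition hit :: "real \<Rightarrow> real" where
  "hit a = (SOME s. 0 < s \<and> X a s = xB \<and> (\<forall>u. 0 \<le> u \<and> u < s \<longrightarrow> xB < X a u))"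

lemma hit:
  assumes "a < vE"
  shows "0 < hit a" "X a (hit a) = xB" "\<And>u. 0 \<le> u \<Longrightarrow> u < hit a \<Longrightarrow> xB < X a u"
  using someI_ex[OF hit_ex[OF assms]] unfolding hit_def[symmetric] by auto

lemma hit_ge: "a < vE \<Longrightarrow> 0 \<le> u \<Longrightarrow> u \<le> hit a \<Longrightarrow> xB \<le> X a u"
  using hit[of a] by (cases "u = hit a") (auto simp: less_le)

lemma hit_X1:
  assumes "a < vE"
  shows "X1 a (hit a) < 0"
proof -
  let ?s = "hit a"
  have ne: "X1 a ?s \<noteq> 0"
  proof -
    have "al a \<ge> - 2 / xA" unfolding al_def by simp
    hence "al a * xB \<ge> - 2 / xA * xB" by (rule mult_right_mono) (use xB_pos in simp)
    moreover have "- 2 / xA * xB > -2" using xBA xA_pos by (simp add: field_simps)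
    ultimately have "al a * xB + 2 > 0" by linarith
    hence "xB * (al a * xB + 2) > 0" using xB_pos by simp
    hence "(X1 a ?s)^2 > 0" using energy[of a ?s] hit(2)[OF assms] by (simp add: algebra_simps power2_eq_square)
    thus ?thesis by auto
  qed
  moreover have "\<not> X1 a ?s > 0"
  proof
    assume pos: "X1 a ?s > 0"
    obtain d where d: "d > 0" "\<And>h. h > 0 \<Longrightarrow> h < d \<Longrightarrow> X a (?s - h) < X a ?s"
      using DERIV_pos_inc_left[OF X_dsa pos] by blast
    define h where "h = min (d/2) (?s/2)"
    have h: "h > 0" "h < d" "h < ?s" unfolding h_def using d hit(1)[OF assms] by auto
    have "X a (?s - h) < X a ?s" using d(2)[OF h(1,2)] .
    hence "X a (?s - h) < xB" using hit(2)[OF assms] by simp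
    moreover have "xB < X a (?s - h)" using hit(3)[OF assms, of "?s - h"] h by simp
    ultimately show False by simp
  qed
  ultimately show ?thesis by simp
qed

end

context kep begin

lemma nbhd_X_pos:
  assumes "a < vE"
  shows "\<exists>p. fst p < 0 \<and> hit a < snd p \<and> (\<forall>u. fst p < u \<and> u < snd p \<longrightarrow> 0 < X a u)"
proof -
  obtain d1 where d1: "d1 > 0" "\<And>y. \<bar>y - 0\<bar> < d1 \<Longrightarrow> 0 < X a y"
    using pos_nbhd[OF X_isCont, of 0 a 0] vals0(1)[of a] xA_pos by auto
  obtain d2 where d2: "d2 > 0" "\<And>y. \<bar>y - hit a\<bar> < d2 \<Longrightarrow> 0 < X a y"
    using pos_nbhd[OF X_isCont, of 0 a "hit a"] hit(2)[OF assms] xB_pos by auto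
  show ?thesis
  proof (intro exI[of _ "(- d1, hit a + d2)"] conjI allI impI)
    fix u assume u: "fst (- d1, hit a + d2) < u \<and> u < snd (- d1, hit a + d2)"
    show "0 < X a u"
    proof (cases "u < 0")
      case True thus ?thesis using d1(2)[of u] u by auto
    next
      case False
      show ?thesis
      proof (cases "u \<le> hit a")
        case True thus ?thesis using hit_ge[OF assms, of u] False xB_pos by auto
      next
        case False thus ?thesis using d2(2)[of u] u by auto
      qed
    qed
  qed (use d1 d2 in auto)
qed

definition lr :: "real \<Rightarrow> real \<times> real" where
  "lr a = (SOME p. fst p < 0 \<and> hit a < snd p \<and> (\<forall>u. fst p < u \<and> u < snd p \<longrightarrow> 0 < X a u))"

abbreviation "lo a \<equiv> fst (lr a)"
abbreviation "hi a \<equiv> snd (lr a)"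

lemma lr:
  assumes "a < vE"
  shows "lo a < 0" "hit a < hi a" "\<And>u. lo a < u \<Longrightarrow> u < hi a \<Longrightarrow> 0 < X a u"
  using someI_ex[OF nbhd_X_pos[OF assms]] unfolding lr_def[symmetric] by auto

lemma Th_mono:
  assumes "a < vE" "lo a < u" "u < v" "v < hi a"
  shows "Th a u < Th a v"
  using assms lr(3)[OF assms(1)] by (intro DERIV_pos_imp_increasing[OF assms(3)]) (auto intro!: Th_dsa)

lemma Th_mono_le:
  assumes "a < vE" "lo a < u" "u \<le> v" "v < hi a"
  shows "Th a u \<le> Th a v"
  using Th_mono[OF assms(1,2) _ assms(4)] assms(3) by (cases "u = v") auto

definition sig :: "real \<Rightarrow> real \<Rightarrow> real" where
  "sig a t = (THE s. lo a < s \<and> s < hi a \<and> Th a s = t)"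

lemma sig_Th:
  assumes "a < vE" "lo a < s" "s < hi a"
  shows "sig a (Th a s) = s"
  unfolding sig_def
proof (rule the_equality)
  show "lo a < s \<and> s < hi a \<and> Th a s = Th a s" using assms by simp
  fix s' assume s': "lo a < s' \<and> s' < hi a \<and> Th a s' = Th a s"
  show "s' = s"
  proof (rule ccontr)
    assume "s' \<noteq> s"
    hence "s' < s \<or> s < s'" by auto
    thus False using Th_mono[OF assms(1)] s' assms by (metis less_irrefl)
  qed
qed

definition lo' :: "real \<Rightarrow> real" where "lo' a = lo a / 2"
definition hi' :: "real \<Rightarrow> real" where "hi' a = (hit a + hi a) / 2"

lemma lohi':
  assumes "a < vE"
  shows "lo a < lo' a" "lo' a < 0" "hit a < hi' a" "hi' a < hi a"
  using lr[OF assms] unfolding lo'_def hi'_def by auto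

definition T :: "real \<Rightarrow> real" where "T a = Th a (hit a)"

lemma Th0: "Th a 0 = 0" by (rule vals0(3))

lemma T_bounds:
  assumes "a < vE"
  shows "Th a (lo' a) < 0" "0 < T a" "T a < Th a (hi' a)"
proof -
  note l = lohi'[OF assms] lr[OF assms] hit(1)[OF assms]
  show "Th a (lo' a) < 0" using Th_mono[OF assms, of "lo' a" 0] l Th0 by auto
  show "0 < T a" unfolding T_def using Th_mono[OF assms, of 0 "hit a"] l Th0 by auto
  show "T a < Th a (hi' a)" unfolding T_def using Th_mono[OF assms, of "hit a" "hi' a"] l by auto
qed

lemma Th_sig:
  assumes "a < vE" "Th a (lo' a) < y" "y < Th a (hi' a)"
  shows "Th a (sig a y) = y" "lo' a \<le> sig a y" "sig a y \<le> hi' a" "lo a < sig a y" "sig a y < hi a"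
proof -
  note l = lohi'[OF assms(1)]
  have cc: "\<forall>x. lo' a \<le> x \<and> x \<le> hi' a \<longrightarrow> isCont (Th a) x" using Th_isCont by blast
  have le: "lo' a \<le> hi' a" using l hit(1)[OF assms(1)] by linarith
  obtain s where s: "lo' a \<le> s" "s \<le> hi' a" "Th a s = y"
    using IVT[OF less_imp_le[OF assms(2)] less_imp_le[OF assms(3)] le cc] by blast
  have "sig a y = s" using sig_Th[OF assms(1), of s] s l by auto
  thus "Th a (sig a y) = y" "lo' a \<le> sig a y" "sig a y \<le> hi' a" "lo a < sig a y" "sig a y < hi a"
    using s l by auto
qed

lemma sig_cont:
  assumes "a < vE" "Th a (lo' a) < t" "t < Th a (hi' a)"
  shows "isCont (sig a) t"
proof -
  note S = Th_sig[OF assms]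
  define x where "x = sig a t"
  define d where "d = min (x - lo a) (hi a - x) / 2"
  have x: "lo a < x" "x < hi a" unfolding x_def using S by auto
  have d: "d > 0" unfolding d_def using x by auto
  have "isCont (sig a) (Th a x)"
  proof (rule isCont_inverse_function[where f="Th a" and g="sig a" and x=x and d=d, OF d])
    fix z assume z: "\<bar>z - x\<bar> \<le> d"
    hence "z - x \<le> d" "x - z \<le> d" by auto
    moreover have "d < x - lo a" "d < hi a - x" unfolding d_def using x by auto
    ultimately have "lo a < z" "z < hi a" by linarith+
    thus "sig a (Th a z) = z" by (rule sig_Th[OF assms(1)])
    show "isCont (Th a) z" by (rule Th_isCont)
  qed
  thus ?thesis unfolding x_def S(1) .
qed

lemma sig_deriv:
  assumes "a < vE" "Th a (lo' a) < t" "t < Th a (hi' a)"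
  shows "(sig a has_real_derivative inverse (X a (sig a t))) (at t)"
proof (rule DERIV_inverse_function[OF Th_dsa _ assms(2,3)])
  show "X a (sig a t) \<noteq> 0" using lr(3)[OF assms(1)] Th_sig[OF assms] by (metis less_irrefl)
  show "\<And>y. Th a (lo' a) < y \<Longrightarrow> y < Th a (hi' a) \<Longrightarrow> Th a (sig a y) = y"
    using Th_sig[OF assms(1)] by blast
  show "isCont (sig a) t" by (rule sig_cont[OF assms])
qed

definition xs :: "real \<Rightarrow> real \<Rightarrow> real" where "xs a t = X a (sig a t)"
definition vs :: "real \<Rightarrow> real \<Rightarrow> real" where "vs a t = X1 a (sig a t) / X a (sig a t)"

lemma in_range:
  assumes "a < vE" "0 \<le> t" "t \<le> T a"
  shows "Th a (lo' a) < t" "t < Th a (hi' a)"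
  using T_bounds[OF assms(1)] assms by auto

lemma sig_range:
  assumes "a < vE" "0 \<le> t" "t \<le> T a"
  shows "0 \<le> sig a t" "sig a t \<le> hit a"
proof -
  note R = in_range[OF assms] note S = Th_sig[OF assms(1) R]
  note l = lohi'[OF assms(1)] lr[OF assms(1)] hit(1)[OF assms(1)]
  show "0 \<le> sig a t"
  proof (rule ccontr)
    assume "\<not> 0 \<le> sig a t"
    hence "Th a (sig a t) < Th a 0" using Th_mono[OF assms(1), of "sig a t" 0] S l by auto
    thus False using S(1) Th0 assms(2) by simp
  qed
  show "sig a t \<le> hit a"
  proof (rule ccontr)
    assume "\<not> sig a t \<le> hit a"
    hence "Th a (hit a) < Th a (sig a t)" using Th_mono[OF assms(1), of "hit a" "sig a t"] S l by auto
    thus False using S(1) assms(3) unfolding T_def by simp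
  qed
qed

lemma xs_pos: "a < vE \<Longrightarrow> 0 \<le> t \<Longrightarrow> t \<le> T a \<Longrightarrow> xB \<le> xs a t"
  unfolding xs_def using sig_range hit_ge by blast

lemma xs_deriv:
  assumes "a < vE" "0 \<le> t" "t \<le> T a"
  shows "(xs a has_real_derivative vs a t) (at t)"
proof -
  note R = in_range[OF assms]
  have "((\<lambda>t. X a (sig a t)) has_real_derivative X1 a (sig a t) * inverse (X a (sig a t))) (at t)"
    by (rule DERIV_chain2[OF X_dsa sig_deriv[OF assms(1) R]])
  thus ?thesis unfolding xs_def vs_def by (simp add: divide_inverse)
qed

lemma vs_deriv:
  assumes "a < vE" "0 \<le> t" "t \<le> T a"
  shows "(vs a has_real_derivative - 1 / (xs a t)^2) (at t)"
proof -
  note R = in_range[OF assms]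
  have ne: "X a (sig a t) \<noteq> 0" using xs_pos[OF assms] xB_pos unfolding xs_def by auto
  have "((\<lambda>t. X1 a (sig a t) / X a (sig a t)) has_real_derivative (- 1 / X a (sig a t)) * inverse (X a (sig a t))) (at t)"
    by (rule DERIV_chain2[OF V_deriv[OF ne] sig_deriv[OF assms(1) R]])
  thus ?thesis unfolding xs_def vs_def by (simp add: divide_inverse power2_eq_square)
qed

lemma sig0: "a < vE \<Longrightarrow> sig a 0 = 0"
  using sig_Th[of a 0] lr[of a] hit(1)[of a] Th0 by auto
lemma sigT: "a < vE \<Longrightarrow> sig a (T a) = hit a"
  unfolding T_def using sig_Th[of a "hit a"] lr[of a] hit(1)[of a] by auto

lemma canon:
  assumes "a < vE"
  shows "line_sol (xs a) (vs a) 0 (T a)" "xs a 0 = xA" "vs a 0 = a" "xs a (T a) = xB"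
    "0 < T a" "vs a (T a) < 0" "\<And>t. 0 \<le> t \<Longrightarrow> t < T a \<Longrightarrow> xB < xs a t"
proof -
  show "0 < T a" by (rule T_bounds(2)[OF assms])
  show "line_sol (xs a) (vs a) 0 (T a)"
    unfolding line_sol_def
  proof (intro conjI ballI)
    show "0 \<le> T a" using \<open>0 < T a\<close> by simp
    fix t assume t: "t \<in> {0..T a}"
    show "0 < xs a t" using xs_pos[OF assms, of t] t xB_pos by auto
    show "(xs a has_real_derivative vs a t) (at t within {0..T a})"
      using xs_deriv[OF assms, of t] t by (auto intro: has_field_derivative_at_within)
    show "(vs a has_real_derivative - 1 / (xs a t)\<^sup>2) (at t within {0..T a})"
      using vs_deriv[OF assms, of t] t by (auto intro: has_field_derivative_at_within)
  qed
  show "xs a 0 = xA" unfolding xs_def using sig0[OF assms] vals0 by simp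
  show "vs a 0 = a" unfolding vs_def using sig0[OF assms] vals0 xA_pos by simp
  show "xs a (T a) = xB" unfolding xs_def using sigT[OF assms] hit[OF assms] by simp
  show "vs a (T a) < 0" unfolding vs_def using sigT[OF assms] hit[OF assms] hit_X1[OF assms] xB_pos
    by (simp add: divide_neg_pos)
  fix t assume t: "0 \<le> t" "t < T a"
  have "sig a t \<noteq> hit a" using Th_sig[OF assms in_range[OF assms t(1)]] t unfolding T_def by auto
  hence "sig a t < hit a" using sig_range[OF assms t(1)] t by force
  thus "xB < xs a t" unfolding xs_def using hit(3)[OF assms] sig_range[OF assms t(1)] t by force
qed

end

lemma deriv_cont_on:
  fixes f :: "real \<Rightarrow> real"
  assumes "\<And>t. t \<in> {a..b} \<Longrightarrow> (f has_real_derivative f' t) (at t within {a..b})"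
  shows "continuous_on {a..b} f"
  unfolding continuous_on_eq_continuous_within using assms DERIV_continuous by blast

lemma mono_within:
  fixes f :: "real \<Rightarrow> real"
  assumes d: "\<And>t. t \<in> {a..b} \<Longrightarrow> (f has_real_derivative f' t) (at t within {a..b})"
    and nn: "\<And>t. t \<in> {a..b} \<Longrightarrow> 0 \<le> f' t" and cd: "a \<le> c" "c \<le> d" "d \<le> b"
  shows "f c \<le> f d"
proof (rule DERIV_nonneg_imp_increasing_open[OF cd(2)])
  fix x assume x: "c < x" "x < d"
  hence "at x within {a..b} = at x" using cd by (intro at_within_Icc_at) auto
  thus "\<exists>y. DERIV f x :> y \<and> 0 \<le> y" using d[of x] nn[of x] x cd by auto
next
  show "continuous_on {c..d} f"
    using continuous_on_subset[OF deriv_cont_on[OF d]] cd by auto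
qed

lemma smono_within:
  fixes f :: "real \<Rightarrow> real"
  assumes d: "\<And>t. t \<in> {a..b} \<Longrightarrow> (f has_real_derivative f' t) (at t within {a..b})"
    and nn: "\<And>t. t \<in> {a..b} \<Longrightarrow> 0 < f' t" and cd: "a \<le> c" "c < d" "d \<le> b"
  shows "f c < f d"
proof (rule DERIV_pos_imp_increasing_open[OF cd(2)])
  fix x assume x: "c < x" "x < d"
  hence "at x within {a..b} = at x" using cd by (intro at_within_Icc_at) auto
  thus "\<exists>y. DERIV f x :> y \<and> 0 < y" using d[of x] nn[of x] x cd by auto
next
  show "continuous_on {c..d} f"
    using continuous_on_subset[OF deriv_cont_on[OF d]] cd by auto
qed

lemma const_within:
  fixes f :: "real \<Rightarrow> real"
  assumes d: "\<And>t. t \<in> {a..b} \<Longrightarrow> (f has_real_derivative 0) (at t within {a..b})"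
    and t: "t \<in> {a..b}"
  shows "f t = f a"
proof -
  have "f a \<le> f t" by (rule mono_within[OF d]) (use t in auto)
  moreover have "(\<lambda>t. - f t) a \<le> (\<lambda>t. - f t) t"
    by (rule mono_within[where f' = "\<lambda>_. 0"]) (use t d in \<open>auto intro!: derivative_eq_intros\<close>)
  ultimately show ?thesis by simp
qed

lemma line_sol_cont:
  assumes "line_sol x v a b"
  shows "continuous_on {a..b} x" "continuous_on {a..b} v"
  using assms unfolding line_sol_def by (auto intro!: deriv_cont_on)

lemma line_sol_restrict:
  assumes "line_sol x v a b" "a \<le> c" "c \<le> b"
  shows "line_sol x v a c"
  using assms unfolding line_sol_def
  by (auto intro: has_field_derivative_subset[where s="{a..b}"])

lemma line_sol_shift:
  assumes "line_sol x v a b"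
  shows "line_sol (\<lambda>t. x (t + a)) (\<lambda>t. v (t + a)) 0 (b - a)"
proof -
  have img: "(\<lambda>t. t + a) ` {0..b - a} = {a..b}" by simp
  have gd: "((\<lambda>t. t + a) has_real_derivative 1) (at t within {0..b-a})" for t
    by (auto intro!: derivative_eq_intros)
  show ?thesis
    using assms unfolding line_sol_def
  proof (intro conjI ballI)
    fix t assume L: "a \<le> b \<and> (\<forall>t\<in>{a..b}. 0 < x t \<and> (x has_real_derivative v t) (at t within {a..b}) \<and>
        (v has_real_derivative - 1 / (x t)\<^sup>2) (at t within {a..b}))" and t: "t \<in> {0..b - a}"
    have ta: "t + a \<in> {a..b}" using t by auto
    show "0 < x (t + a)" using L ta by auto
    show "((\<lambda>t. x (t + a)) has_real_derivative v (t + a)) (at t within {0..b - a})"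
      using DERIV_image_chain[of x "v (t+a)" "\<lambda>t. t + a" t "{0..b-a}" 1] L ta gd unfolding img o_def by auto
    show "((\<lambda>t. v (t + a)) has_real_derivative - 1 / (x (t + a))\<^sup>2) (at t within {0..b - a})"
      using DERIV_image_chain[of v "- 1 / (x (t + a))\<^sup>2" "\<lambda>t. t + a" t "{0..b-a}" 1] L ta gd unfolding img o_def by auto
  qed auto
qed

lemma line_energy:
  assumes "line_sol x v a b" "t \<in> {a..b}"
  shows "(v t)^2 - 2 / x t = (v a)^2 - 2 / x a"
proof -
  have L: "\<And>t. t \<in> {a..b} \<Longrightarrow> 0 < x t \<and> (x has_real_derivative v t) (at t within {a..b}) \<and>
        (v has_real_derivative - 1 / (x t)\<^sup>2) (at t within {a..b})"
    using assms unfolding line_sol_def by auto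
  have "(\<lambda>t. (v t)^2 - 2 / x t) t = (\<lambda>t. (v t)^2 - 2 / x t) a"
  proof (rule const_within[OF _ assms(2)])
    fix s assume s: "s \<in> {a..b}"
    note Ls = L[OF s]
    show "((\<lambda>t. (v t)\<^sup>2 - 2 / x t) has_real_derivative 0) (at s within {a..b})"
      apply (rule DERIV_cong)
       apply (rule derivative_intros Ls[THEN conjunct2, THEN conjunct1] Ls[THEN conjunct2, THEN conjunct2])+
      using Ls apply (auto simp: field_simps power2_eq_square)
      done
  qed
  thus ?thesis by simp
qed

lemma uniq_ineq:
  fixes u w w' g K :: real
  assumes "0 \<le> g" "1 + g \<le> K" "w' = u * g"
  shows "2 * u * w + 2 * w * w' \<le> K * (u^2 + w^2)"
proof -
  have e: "2 * u * w + 2 * w * w' = (2 * u * w) * (1 + g)" using assms(3) by (simp add: algebra_simps)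
  have b: "2 * u * w \<le> u^2 + w^2" using sum_squares_ge_zero[of "u - w" 0] by (simp add: power2_eq_square algebra_simps)
  have sq: "0 \<le> u^2 + w^2" by simp
  show ?thesis
  proof (cases "0 \<le> u * w")
    case True
    have "(2 * u * w) * (1 + g) \<le> (u^2 + w^2) * (1 + g)" by (rule mult_right_mono[OF b]) (use assms in simp)
    also have "\<dots> \<le> (u^2 + w^2) * K" by (rule mult_left_mono[OF assms(2) sq])
    finally show ?thesis using e by (simp add: mult.commute)
  next
    case False
    hence "(2 * u * w) * (1 + g) \<le> 0" using assms(1) by (simp add: mult_nonpos_nonneg)
    moreover have "0 \<le> K * (u^2 + w^2)" using assms(1,2) sq by simp
    ultimately show ?thesis using e by simp
  qed
qed

lemma line_uniq:
  assumes L1: "line_sol x1 v1 0 T" and L2: "line_sol x2 v2 0 T"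
    and i: "x1 0 = x2 0" "v1 0 = v2 0" and t: "t \<in> {0..T}"
  shows "x1 t = x2 t \<and> v1 t = v2 t"
proof -
  have T0: "0 \<le> T" using L1 unfolding line_sol_def by simp
  have P1: "\<And>s. s \<in> {0..T} \<Longrightarrow> 0 < x1 s \<and> (x1 has_real_derivative v1 s) (at s within {0..T}) \<and>
        (v1 has_real_derivative - 1 / (x1 s)\<^sup>2) (at s within {0..T})"
    using L1 unfolding line_sol_def by auto
  have P2: "\<And>s. s \<in> {0..T} \<Longrightarrow> 0 < x2 s \<and> (x2 has_real_derivative v2 s) (at s within {0..T}) \<and>
        (v2 has_real_derivative - 1 / (x2 s)\<^sup>2) (at s within {0..T})"
    using L2 unfolding line_sol_def by auto
  define g where "g s = (x1 s + x2 s) / ((x1 s)^2 * (x2 s)^2)" for s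
  have nz: "\<forall>s\<in>{0..T}. (x1 s)^2 * (x2 s)^2 \<noteq> 0" using P1 P2 by fastforce
  have gc: "continuous_on {0..T} g"
    unfolding g_def using line_sol_cont[OF L1] line_sol_cont[OF L2]
    by (intro continuous_intros continuous_on_divide nz) auto
  obtain s0 where "s0 \<in> {0..T}" "\<forall>s\<in>{0..T}. g s \<le> g s0"
    using continuous_attains_sup[OF compact_Icc _ gc] T0 by auto
  then obtain L where L: "\<And>s. s \<in> {0..T} \<Longrightarrow> g s \<le> L" by blast
  define K where "K = 1 + max 0 L"
  have K: "\<And>s. s \<in> {0..T} \<Longrightarrow> 1 + g s \<le> K" unfolding K_def using L by fastforce
  have g0: "\<And>s. s \<in> {0..T} \<Longrightarrow> 0 \<le> g s" unfolding g_def using P1 P2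
    by (metis add_pos_pos divide_nonneg_pos less_imp_le mult_pos_pos zero_less_power)
  define \<phi> where "\<phi> s = (x1 s - x2 s)^2 + (v1 s - v2 s)^2" for s
  define \<psi> where "\<psi> s = \<phi> s * exp (- K * s)" for s
  define \<psi>' where "\<psi>' s = (2 * (x1 s - x2 s) * (v1 s - v2 s) + 2 * (v1 s - v2 s) * (- 1 / (x1 s)\<^sup>2 - - 1 / (x2 s)\<^sup>2)) * exp (- K * s)
      - K * \<phi> s * exp (- K * s)" for s
  have dpsi: "(\<psi> has_real_derivative \<psi>' s) (at s within {0..T})" if s: "s \<in> {0..T}" for s
  proof -
    note A = P1[OF s] P2[OF s]
    show ?thesis
      unfolding \<psi>_def \<phi>_def \<psi>'_def
      apply (rule DERIV_cong)
       apply (rule derivative_intros A[THEN conjunct2, THEN conjunct1] A[THEN conjunct2, THEN conjunct2])+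
      using A apply (simp add: field_simps)
      done
  qed
  have npsi: "\<psi>' s \<le> 0" if s: "s \<in> {0..T}" for s
  proof -
    have w': "- 1 / (x1 s)\<^sup>2 - - 1 / (x2 s)\<^sup>2 = (x1 s - x2 s) * g s"
      unfolding g_def using P1[OF s] P2[OF s] by (simp add: field_simps power2_eq_square)
    have "2 * (x1 s - x2 s) * (v1 s - v2 s) + 2 * (v1 s - v2 s) * (- 1 / (x1 s)\<^sup>2 - - 1 / (x2 s)\<^sup>2)
        \<le> K * ((x1 s - x2 s)^2 + (v1 s - v2 s)^2)"
      by (rule uniq_ineq[OF g0[OF s] K[OF s] w'])
    hence "(2 * (x1 s - x2 s) * (v1 s - v2 s) + 2 * (v1 s - v2 s) * (- 1 / (x1 s)\<^sup>2 - - 1 / (x2 s)\<^sup>2)) * exp (- K * s)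
        \<le> K * \<phi> s * exp (- K * s)" unfolding \<phi>_def by (rule mult_right_mono) simp
    thus ?thesis unfolding \<psi>'_def by simp
  qed
  have "(\<lambda>s. - \<psi> s) 0 \<le> (\<lambda>s. - \<psi> s) t"
    by (rule mono_within[where f'="\<lambda>s. - \<psi>' s"]) (use t npsi dpsi in \<open>auto intro!: derivative_eq_intros\<close>)
  moreover have "\<psi> 0 = 0" unfolding \<psi>_def \<phi>_def using i by simp
  ultimately have "\<psi> t \<le> 0" by simp
  moreover have "0 \<le> \<phi> t" unfolding \<phi>_def by simp
  ultimately have "\<phi> t = 0" unfolding \<psi>_def by (simp add: mult_le_0_iff)
  thus ?thesis unfolding \<phi>_def by (simp add: add_nonneg_eq_0_iff)
qed

lemma hit_once:
  assumes L: "line_sol x v 0 T" and t1: "0 \<le> t1" "v t1 < 0" "t1 < t2" "t2 \<le> T"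
  shows "x t2 < x t1"
proof -
  have P: "\<And>s. s \<in> {0..T} \<Longrightarrow> 0 < x s \<and> (x has_real_derivative v s) (at s within {0..T}) \<and>
        (v has_real_derivative - 1 / (x s)\<^sup>2) (at s within {0..T})"
    using L unfolding line_sol_def by auto
  have vneg: "v s < 0" if s: "s \<in> {t1..T}" for s
  proof -
    have "(\<lambda>s. - v s) t1 \<le> (\<lambda>s. - v s) s"
      by (rule mono_within[where f'="\<lambda>s. 1 / (x s)^2" and a=0 and b=T])
        (use s t1 P in \<open>auto intro!: derivative_eq_intros\<close>)
    thus ?thesis using t1 by simp
  qed
  have "(\<lambda>s. - x s) t1 < (\<lambda>s. - x s) t2"
  proof (rule smono_within[where f="\<lambda>s. - x s" and f'="\<lambda>s. - v s" and a=t1 and b=T and c=t1 and d=t2])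
    fix s assume s: "s \<in> {t1..T}"
    hence s0: "s \<in> {0..T}" using t1 by auto
    have "(x has_real_derivative v s) (at s within {t1..T})"
      using P[OF s0] has_field_derivative_subset[of x "v s" s "{0..T}" "{t1..T}"] t1 by auto
    thus "((\<lambda>s. - x s) has_real_derivative - v s) (at s within {t1..T})"
      by (auto intro!: derivative_eq_intros)
    show "0 < - v s" using vneg[OF s] by simp
  qed (use t1 in auto)
  thus ?thesis by simp
qed

context kep begin

lemma sol_eq:
  assumes a: "a < vE" and L: "line_sol x v 0 T'" and i: "x 0 = xA" "v 0 = a" "x T' = xB"
  shows "T' = T a"
proof -
  note C = canon[OF a]
  have T'0: "0 \<le> T'" using L unfolding line_sol_def by simp
  define m where "m = min T' (T a)"
  have m: "0 \<le> m" "m \<le> T'" "m \<le> T a" unfolding m_def using T'0 C(5) by auto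
  have eq: "x s = xs a s \<and> v s = vs a s" if "s \<in> {0..m}" for s
    by (rule line_uniq[OF line_sol_restrict[OF L m(1,2)] line_sol_restrict[OF C(1) m(1,3)]])
       (use i C that in auto)
  show ?thesis
  proof (rule ccontr)
    assume ne: "T' \<noteq> T a"
    show False
    proof (cases "T' < T a")
      case True
      hence "m = T'" unfolding m_def by simp
      hence "x T' = xs a T'" using eq[of T'] m by auto
      thus False using C(7)[of T'] T'0 True i by simp
    next
      case False
      hence lt: "T a < T'" using ne by simp
      hence "m = T a" unfolding m_def by simp
      hence e: "x (T a) = xB" "v (T a) < 0" using eq[of "T a"] m C by auto
      have "x T' < x (T a)" by (rule hit_once[OF L _ e(2) lt]) (use C(5) in simp_all)
      thus False using e i by simp
    qed
  qed
qed

lemma TDR: "a < vE \<Longrightarrow> T_DR xA xB a = T a"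
proof -
  assume a: "a < vE"
  have "{T'. 0 < T' \<and> (\<exists>x v. line_sol x v 0 T' \<and> x 0 = xA \<and> v 0 = a \<and> x T' = xB)} = {T a}"
    using sol_eq[OF a] canon[OF a] by blast
  thus ?thesis unfolding T_DR_def by simp
qed

lemma sol_lt_vE:
  assumes L: "line_sol x v 0 T'" and i: "x 0 = xA" "v 0 = a" "x T' = xB"
  shows "a < vE"
proof (rule ccontr)
  assume "\<not> a < vE"
  hence a: "vE \<le> a" by simp
  have P: "\<And>s. s \<in> {0..T'} \<Longrightarrow> 0 < x s \<and> (x has_real_derivative v s) (at s within {0..T'}) \<and>
        (v has_real_derivative - 1 / (x s)\<^sup>2) (at s within {0..T'})"
    using L unfolding line_sol_def by auto
  have T'0: "0 \<le> T'" using L unfolding line_sol_def by simp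
  have apos: "0 < a" using a vE_pos by simp
  have "vE^2 \<le> a^2" using a vE_pos by (simp add: power_mono)
  hence E0: "0 \<le> a^2 - 2 / xA" using vE_sq by simp
  have vne: "v s \<noteq> 0" if s: "s \<in> {0..T'}" for s
  proof -
    have "(v s)^2 - 2 / x s = a^2 - 2 / xA" using line_energy[OF L s] i by simp
    hence "(v s)^2 \<ge> 2 / x s" using E0 by simp
    moreover have "2 / x s > 0" using P[OF s] by simp
    ultimately show ?thesis by auto
  qed
  have vpos: "0 < v s" if s: "s \<in> {0..T'}" for s
  proof (rule ccontr)
    assume "\<not> 0 < v s"
    hence "v s \<le> 0" by simp
    moreover have "continuous_on {0..s} v"
      using continuous_on_subset[OF line_sol_cont(2)[OF L]] s by auto
    ultimately obtain u where "0 \<le> u" "u \<le> s" "v u = 0"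
      using IVT2'[of v s 0 0] i apos s by force
    thus False using vne[of u] s by auto
  qed
  have "x 0 \<le> x T'"
    by (rule mono_within[where f'=v and a=0 and b=T']) (use P vpos T'0 in \<open>auto intro: less_imp_le\<close>)
  thus False using i xBA by simp
qed

end

lemma vd_inner:
  assumes "(f has_vector_derivative f') F"
  shows "((\<lambda>t. inner (f t) c) has_real_derivative inner f' c) F"
proof -
  have "(f has_derivative (\<lambda>h. h *\<^sub>R f')) F" using assms unfolding has_vector_derivative_def .
  from bounded_linear.has_derivative[OF bounded_linear_inner_left this]
  have "((\<lambda>t. inner (f t) c) has_derivative (\<lambda>h. inner (h *\<^sub>R f') c)) F" .
  moreover have "(\<lambda>h. inner (h *\<^sub>R f') c) = (*) (inner f' c)" by (rule ext) simp
  ultimately show ?thesis unfolding has_field_derivative_def by simp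
qed

lemma rd_scale:
  assumes "(f has_real_derivative f') F"
  shows "((\<lambda>t. f t *\<^sub>R e) has_vector_derivative f' *\<^sub>R e) F"
proof -
  have eq: "(\<lambda>h. h * f') = (*) f'" by (rule ext) simp
  have "(f has_derivative (\<lambda>h. h * f')) F" using assms unfolding has_field_derivative_def eq .
  from bounded_linear.has_derivative[OF bounded_linear_scaleR_left this, of e]
  show ?thesis unfolding has_vector_derivative_def by simp
qed

lemma kep_planar:
  fixes q p :: "real \<Rightarrow> 'a::euclidean_space" and e w c :: 'a
  assumes K: "kepler_sol q p tA tB" and ab: "tA < tB"
    and qA: "q tA = xA *\<^sub>R e" and qB: "q tB = xB *\<^sub>R e" and xApos: "0 < xA" "0 < xB"
    and W: "\<And>t. t \<in> {tA..tB} \<Longrightarrow> 0 < inner (q t) w"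
    and ce: "inner e c = 0"
  shows "\<forall>t\<in>{tA..tB}. inner (q t) c = 0 \<and> inner (p t) c = 0"
proof -
  have P: "\<And>t. t \<in> {tA..tB} \<Longrightarrow> q t \<noteq> 0 \<and> (q has_vector_derivative p t) (at t within {tA..tB}) \<and>
        (p has_vector_derivative (- (1 / norm (q t) ^ 3)) *\<^sub>R q t) (at t within {tA..tB})"
    using K unfolding kepler_sol_def by auto
  let ?k = "\<lambda>t. 1 / norm (q t) ^ 3"
  define N where "N t = inner (p t) c * inner (q t) w - inner (q t) c * inner (p t) w" for t
  have dN: "(N has_real_derivative 0) (at t within {tA..tB})" if t: "t \<in> {tA..tB}" for t
  proof -
    note A = P[OF t]
    have d1: "((\<lambda>t. inner (q t) c) has_real_derivative inner (p t) c) (at t within {tA..tB})"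
      "((\<lambda>t. inner (q t) w) has_real_derivative inner (p t) w) (at t within {tA..tB})"
      using vd_inner A by blast+
    have d2: "((\<lambda>t. inner (p t) c) has_real_derivative - ?k t * inner (q t) c) (at t within {tA..tB})"
      "((\<lambda>t. inner (p t) w) has_real_derivative - ?k t * inner (q t) w) (at t within {tA..tB})"
      using vd_inner[OF A[THEN conjunct2, THEN conjunct2]] by (simp_all add: inner_scaleR_left)
    show ?thesis unfolding N_def
      apply (rule DERIV_cong)
       apply (rule derivative_intros d1 d2)+
      apply (simp add: algebra_simps)
      done
  qed
  have Nc: "N t = N tA" if "t \<in> {tA..tB}" for t by (rule const_within[OF dN that])
  have ew: "0 < inner e w"
  proof -
    have "0 < inner (q tA) w" using W[of tA] ab by simp
    thus ?thesis using qA xApos by (simp add: zero_less_mult_iff)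
  qed
  have NA: "N tA = inner (p tA) c * (xA * inner e w)" unfolding N_def qA using ce by (simp add: inner_commute)
  define f where "f t = inner (q t) c / inner (q t) w" for t
  have df: "(f has_real_derivative N tA / (inner (q t) w)^2) (at t within {tA..tB})" if t: "t \<in> {tA..tB}" for t
  proof -
    note A = P[OF t]
    have d1: "((\<lambda>t. inner (q t) c) has_real_derivative inner (p t) c) (at t within {tA..tB})"
      "((\<lambda>t. inner (q t) w) has_real_derivative inner (p t) w) (at t within {tA..tB})"
      using vd_inner A by blast+
    have ne: "inner (q t) w \<noteq> 0" using W[OF t] by simp
    show ?thesis unfolding f_def
      apply (rule DERIV_cong)
       apply (rule DERIV_divide[OF d1 ne])
      using Nc[OF t] ne unfolding N_def by (simp add: power2_eq_square)
  qed
  have fA: "f tA = 0" unfolding f_def qA using ce by (simp add: inner_commute)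
  have fB: "f tB = 0" unfolding f_def qB using ce by (simp add: inner_commute)
  have N0: "N tA = 0"
  proof (rule ccontr)
    assume ne: "N tA \<noteq> 0"
    show False
    proof (cases "N tA > 0")
      case True
      have "f tA < f tB"
      proof (rule smono_within[OF df])
        fix t assume t: "t \<in> {tA..tB}"
        have "0 < inner (q t) w" by (rule W[OF t])
        thus "0 < N tA / (inner (q t) w)^2" using True by simp
      qed (use ab in auto)
      thus False using fA fB by simp
    next
      case False
      hence neg: "N tA < 0" using ne by simp
      have "(\<lambda>t. - f t) tA < (\<lambda>t. - f t) tB"
      proof (rule smono_within[where f="\<lambda>t. - f t" and f'="\<lambda>t. - (N tA / (inner (q t) w)^2)" and a=tA and b=tB])
        fix t assume t: "t \<in> {tA..tB}"
        have "0 < inner (q t) w" by (rule W[OF t])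
        thus "0 < - (N tA / (inner (q t) w)^2)" using neg by (simp add: divide_neg_pos)
        show "((\<lambda>t. - f t) has_real_derivative - (N tA / (inner (q t) w)^2)) (at t within {tA..tB})"
          using df[OF t] by (rule DERIV_minus)
      qed (use ab in auto)
      thus False using fA fB by simp
    qed
  qed
  show ?thesis
  proof
    fix t assume t: "t \<in> {tA..tB}"
    have "f t = f tA" by (rule const_within[OF _ t]) (use df N0 in simp)
    hence qc: "inner (q t) c = 0" using fA W[OF t] unfolding f_def by simp
    have "N t = 0" using Nc[OF t] N0 by simp
    hence "inner (p t) c * inner (q t) w = 0" unfolding N_def using qc by simp
    thus "inner (q t) c = 0 \<and> inner (p t) c = 0" using qc W[OF t] by simp
  qed
qed

lemma on_line:
  fixes y e :: "'a::real_inner"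
  assumes "norm e = 1" "\<And>c. inner e c = 0 \<Longrightarrow> inner y c = 0"
  shows "y = inner y e *\<^sub>R e"
proof -
  define c where "c = y - inner y e *\<^sub>R e"
  have ee: "inner e e = 1" using assms(1) by (simp add: dot_square_norm)
  have "inner e c = 0" unfolding c_def using ee by (simp add: inner_diff_right inner_commute)
  hence "inner y c = 0" by (rule assms(2))
  moreover have "inner c c = inner y c - inner y e * inner e c" unfolding c_def
    by (simp add: inner_diff_left)
  ultimately have "inner c c = 0" using \<open>inner e c = 0\<close> by simp
  thus ?thesis unfolding c_def by simp
qed

context kep begin

lemma kep_fwd:
  fixes q p :: "real \<Rightarrow> 'a::euclidean_space" and e :: 'a
  assumes e: "norm e = 1" and ab: "tA < tB" and K: "kepler_sol q p tA tB"
    and qA: "q tA = xA *\<^sub>R e" and qB: "q tB = xB *\<^sub>R e" and D: "direct_arc q tA tB"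
  shows "\<exists>vA<vE. tB - tA = T_DR xA xB vA \<and>
           (\<exists>x v. line_sol x v tA tB \<and> x tA = xA \<and> v tA = vA \<and>
                 (\<forall>t\<in>{tA..tB}. q t = x t *\<^sub>R e \<and> p t = v t *\<^sub>R e))"
proof -
  have P: "\<And>t. t \<in> {tA..tB} \<Longrightarrow> q t \<noteq> 0 \<and> (q has_vector_derivative p t) (at t within {tA..tB}) \<and>
        (p has_vector_derivative (- (1 / norm (q t) ^ 3)) *\<^sub>R q t) (at t within {tA..tB})"
    using K unfolding kepler_sol_def by auto
  have qc: "continuous_on {tA..tB} q"
    unfolding continuous_on_eq_continuous_within using P has_vector_derivative_continuous by blast
  let ?H = "convex hull (q ` {tA..tB})"
  have "compact ?H" by (intro compact_convex_hull compact_continuous_image qc compact_Icc)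
  hence "closed ?H" by (rule compact_imp_closed)
  moreover have "0 \<notin> ?H" using D unfolding direct_arc_def .
  ultimately obtain w b where wb: "0 < b" "\<forall>y\<in>?H. b < inner w y"
    using separating_hyperplane_closed_0[OF convex_convex_hull] by blast
  have W: "0 < inner (q t) w" if "t \<in> {tA..tB}" for t
  proof -
    have "q t \<in> ?H" using that by (intro hull_inc) auto
    thus ?thesis using wb by (auto simp: inner_commute)
  qed
  have pl: "\<forall>t\<in>{tA..tB}. inner (q t) c = 0 \<and> inner (p t) c = 0" if "inner e c = 0" for c
    by (rule kep_planar[OF K ab qA qB xA_pos xB_pos W that])
  define x where "x t = inner (q t) e" for t
  define v where "v t = inner (p t) e" for t
  have qx: "q t = x t *\<^sub>R e" "p t = v t *\<^sub>R e" if "t \<in> {tA..tB}" for t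
    unfolding x_def v_def using on_line[OF e] pl that by blast+
  have ee: "inner e e = 1" using e by (simp add: dot_square_norm)
  have xA': "x tA = xA" "x tB = xB" unfolding x_def qA qB using ee by simp_all
  have xc: "continuous_on {tA..tB} x" unfolding x_def by (intro continuous_intros qc)
  have xne: "x t \<noteq> 0" if "t \<in> {tA..tB}" for t using P[OF that] qx[OF that] by auto
  have xpos: "0 < x t" if t: "t \<in> {tA..tB}" for t
  proof (rule ccontr)
    assume "\<not> 0 < x t"
    hence "x t \<le> 0" by simp
    moreover have "continuous_on {tA..t} x" using continuous_on_subset[OF xc] t by auto
    ultimately obtain u where "tA \<le> u" "u \<le> t" "x u = 0"
      using IVT2'[of x t 0 tA] xA' xA_pos t by force
    thus False using xne[of u] t by auto
  qed
  have L: "line_sol x v tA tB"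
    unfolding line_sol_def
  proof (intro conjI ballI)
    show "tA \<le> tB" using ab by simp
    fix t assume t: "t \<in> {tA..tB}"
    show "0 < x t" by (rule xpos[OF t])
    show "(x has_real_derivative v t) (at t within {tA..tB})"
      unfolding x_def v_def using vd_inner P[OF t] by blast
    have nq: "norm (q t) = x t" using qx[OF t] xpos[OF t] e by simp
    have "(v has_real_derivative inner ((- (1 / norm (q t) ^ 3)) *\<^sub>R q t) e) (at t within {tA..tB})"
      unfolding v_def using vd_inner P[OF t] by blast
    moreover have "inner ((- (1 / norm (q t) ^ 3)) *\<^sub>R q t) e = - 1 / (x t)^2"
      unfolding nq using xpos[OF t] by (simp add: x_def[symmetric] power2_eq_square power3_eq_cube)
    ultimately show "(v has_real_derivative - 1 / (x t)\<^sup>2) (at t within {tA..tB})" by simp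
  qed
  define vA where "vA = v tA"
  have L0: "line_sol (\<lambda>t. x (t + tA)) (\<lambda>t. v (t + tA)) 0 (tB - tA)" by (rule line_sol_shift[OF L])
  have i: "(\<lambda>t. x (t + tA)) 0 = xA" "(\<lambda>t. v (t + tA)) 0 = vA" "(\<lambda>t. x (t + tA)) (tB - tA) = xB"
    using xA' unfolding vA_def by simp_all
  have vA: "vA < vE" by (rule sol_lt_vE[OF L0 i])
  have "tB - tA = T vA" by (rule sol_eq[OF vA L0 i])
  hence "tB - tA = T_DR xA xB vA" using TDR[OF vA] by simp
  thus ?thesis using vA L xA' qx unfolding vA_def by blast
qed

lemma kep_bwd:
  fixes q p :: "real \<Rightarrow> 'a::euclidean_space" and e :: 'a
  assumes e: "norm e = 1" and vA: "vA < vE" and TT: "tB - tA = T_DR xA xB vA"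
    and L: "line_sol x v tA tB" and i: "x tA = xA" "v tA = vA"
    and qp: "\<forall>t\<in>{tA..tB}. q t = x t *\<^sub>R e \<and> p t = v t *\<^sub>R e"
  shows "tA < tB \<and> kepler_sol q p tA tB \<and> q tA = xA *\<^sub>R e \<and> q tB = xB *\<^sub>R e \<and> direct_arc q tA tB"
proof -
  note C = canon[OF vA]
  have Tq: "tB - tA = T vA" using TT TDR[OF vA] by simp
  have ab: "tA < tB" using Tq C(5) by simp
  have Pl: "\<And>t. t \<in> {tA..tB} \<Longrightarrow> 0 < x t \<and> (x has_real_derivative v t) (at t within {tA..tB}) \<and>
        (v has_real_derivative - 1 / (x t)\<^sup>2) (at t within {tA..tB})"
    using L unfolding line_sol_def by auto
  have L0: "line_sol (\<lambda>t. x (t + tA)) (\<lambda>t. v (t + tA)) 0 (T vA)"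
    using line_sol_shift[OF L] Tq by simp
  have "x (T vA + tA) = xs vA (T vA)"
    using line_uniq[OF L0 C(1), of "T vA"] i C C(5) by auto
  hence xB': "x tB = xB" using Tq C(4) by (simp add: algebra_simps)
  have tA_in: "tA \<in> {tA..tB}" "tB \<in> {tA..tB}" using ab by auto
  have ee: "inner e e = 1" using e by (simp add: dot_square_norm)
  have "kepler_sol q p tA tB"
    unfolding kepler_sol_def
  proof (intro conjI ballI)
    show "tA \<le> tB" using ab by simp
    fix t assume t: "t \<in> {tA..tB}"
    show "q t \<noteq> 0" using qp t Pl[OF t] e by auto
    have "((\<lambda>t. x t *\<^sub>R e) has_vector_derivative v t *\<^sub>R e) (at t within {tA..tB})"
      using rd_scale Pl[OF t] by blast
    thus "(q has_vector_derivative p t) (at t within {tA..tB})"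
      using has_vector_derivative_transform[OF t, of q "\<lambda>t. x t *\<^sub>R e"] qp t by auto
    have "((\<lambda>t. v t *\<^sub>R e) has_vector_derivative (- 1 / (x t)\<^sup>2) *\<^sub>R e) (at t within {tA..tB})"
      using rd_scale Pl[OF t] by blast
    moreover have "(- 1 / (x t)\<^sup>2) *\<^sub>R e = (- (1 / norm (q t) ^ 3)) *\<^sub>R q t"
      using qp t Pl[OF t] e by (simp add: power2_eq_square power3_eq_cube)
    ultimately show "(p has_vector_derivative (- (1 / norm (q t) ^ 3)) *\<^sub>R q t) (at t within {tA..tB})"
      using has_vector_derivative_transform[OF t, of p "\<lambda>t. v t *\<^sub>R e"] qp t by auto
  qed
  moreover have "direct_arc q tA tB"
  proof -
    have "convex hull (q ` {tA..tB}) \<subseteq> {y. inner e y > 0}"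
    proof (rule hull_minimal)
      show "q ` {tA..tB} \<subseteq> {y. inner e y > 0}" using qp Pl ee by auto
      show "convex {y. inner e y > 0}" by (rule convex_halfspace_gt)
    qed
    thus ?thesis unfolding direct_arc_def by auto
  qed
  ultimately show ?thesis using ab qp tA_in i xB' by auto
qed

end

lemma alg1:
  fixes x x1 al p p1 q :: real
  assumes "x \<noteq> 0" "x1^2 = al * x^2 + 2 * x"
  shows "((p1 * x - (al * x + 1) * q) * x - (p * x - x1 * q) * x1) / (x * x) = x * ((p1 * x - x1 * p + q) / (x * x))"
proof -
  have "(p1 * x - (al * x + 1) * q) * x - (p * x - x1 * q) * x1 = x * (p1 * x - x1 * p + q) + q * (x1^2 - al * x^2 - 2 * x)"
    by (simp add: algebra_simps power2_eq_square)
  also have "\<dots> = x * (p1 * x - x1 * p + q)" using assms(2) by simp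
  finally show ?thesis by simp
qed

lemma alg2:
  fixes x x1 al p p1 q a :: real
  assumes "x \<noteq> 0" "x1^2 = al * x^2 + 2 * x" "x1 * p1 = a * x^2 + al * x * p + p"
  shows "(2 * a * (x * x) * (x * x) - (p1 * x - x1 * p + q) * (x1 * x + x1 * x)) / ((x * x) * (x * x))
       = 2 * ((p * x - x1 * q) / x) / (x * x)"
proof -
  have "2 * a * (x * x) * (x * x) - (p1 * x - x1 * p + q) * (x1 * x + x1 * x)
      = 2 * x * (p * x - x1 * q) + 2 * x * (- x * (x1 * p1 - (a * x^2 + al * x * p + p)) + p * (x1^2 - (al * x^2 + 2 * x)))"
    by (simp add: algebra_simps power2_eq_square)
  also have "\<dots> = 2 * x * (p * x - x1 * q)" using assms(2,3) by simp
  finally show ?thesis using assms(1) by (simp add: field_simps)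
qed

context kep begin

lemma J_pos:
  assumes av: "a < vE"
  shows "0 < P a (hit a) - X1 a (hit a) * Q a (hit a) / X a (hit a)"
proof -
  define s0 where "s0 = hit a"
  have s0: "0 < s0" unfolding s0_def using hit(1)[OF av] .
  have Xp: "0 < X a s" if "0 \<le> s" "s \<le> s0" for s
    using hit_ge[OF av that[unfolded s0_def]] xB_pos by simp
  define Nj where "Nj s = P a s * X a s - X1 a s * Q a s" for s
  define Nk where "Nk s = P1 a s * X a s - X1 a s * P a s + Q a s" for s
  define J where "J s = Nj s / X a s" for s
  define K where "K s = Nk s / (X a s * X a s)" for s
  have dNj: "(Nj has_real_derivative P1 a s * X a s - (al a * X a s + 1) * Q a s) (at s)" for s
    unfolding Nj_def
    by (rule DERIV_cong[OF DERIV_diff[OF DERIV_mult[OF P_dsa X_dsa] DERIV_mult[OF X1_dsa Q_dsa]]])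
       (simp add: algebra_simps)
  have dNk: "(Nk has_real_derivative 2 * a * (X a s * X a s)) (at s)" for s
    unfolding Nk_def
    by (rule DERIV_cong[OF DERIV_add[OF DERIV_diff[OF DERIV_mult[OF P1_dsa X_dsa] DERIV_mult[OF X1_dsa P_dsa]] Q_dsa]])
       (simp add: algebra_simps)
  have dJ: "(J has_real_derivative X a s * K s) (at s)" if "0 \<le> s" "s \<le> s0" for s
  proof -
    have ne: "X a s \<noteq> 0" using Xp[OF that] by simp
    show ?thesis unfolding J_def K_def
      apply (rule DERIV_cong[OF DERIV_divide[OF dNj X_dsa ne]])
      unfolding Nj_def Nk_def by (rule alg1[OF ne energy])
  qed
  have dK: "(K has_real_derivative 2 * J s / (X a s * X a s)) (at s)" if "0 \<le> s" "s \<le> s0" for s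
  proof -
    have ne: "X a s \<noteq> 0" using Xp[OF that] by simp
    have ne2: "X a s * X a s \<noteq> 0" using ne by simp
    show ?thesis unfolding J_def K_def
      apply (rule DERIV_cong[OF DERIV_divide[OF dNk DERIV_mult[OF X_dsa X_dsa] ne2]])
      unfolding Nj_def Nk_def by (rule alg2[OF ne energy lin_energy])
  qed
  have J0: "J 0 = 0" unfolding J_def Nj_def using vals0 by simp
  have K0: "K 0 = 1" unfolding K_def Nk_def using vals0 xA_pos by simp
  have JK: "0 \<le> J s * K s" if "0 \<le> s" "s \<le> s0" for s
  proof -
    have "J 0 * K 0 \<le> J s * K s"
    proof (rule DERIV_nonneg_imp_nondecreasing[OF that(1)])
      fix u assume u: "0 \<le> u" "u \<le> s"
      hence u': "0 \<le> u" "u \<le> s0" using that by auto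
      have "0 < X a u" by (rule Xp[OF u'])
      hence h1: "0 \<le> X a u * (K u * K u)" by simp
      have "2 * J u / (X a u * X a u) * J u = 2 * (J u * J u) / (X a u * X a u)" by simp
      hence h2: "0 \<le> 2 * J u / (X a u * X a u) * J u" by simp
      have "0 \<le> X a u * K u * K u + 2 * J u / (X a u * X a u) * J u"
        using h1 h2 by (simp add: mult.assoc)
      thus "\<exists>y. ((\<lambda>s. J s * K s) has_real_derivative y) (at u) \<and> 0 \<le> y"
        using DERIV_mult[OF dJ[OF u'] dK[OF u']] by blast
    qed
    thus ?thesis using J0 by simp
  qed
  have KK: "1 \<le> K s * K s" if "0 \<le> s" "s \<le> s0" for s
  proof -
    have "K 0 * K 0 \<le> K s * K s"
    proof (rule DERIV_nonneg_imp_nondecreasing[OF that(1)])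
      fix u assume u: "0 \<le> u" "u \<le> s"
      hence u': "0 \<le> u" "u \<le> s0" using that by auto
      have "0 < X a u" by (rule Xp[OF u'])
      have e: "2 * J u / (X a u * X a u) * K u = 2 * (J u * K u) / (X a u * X a u)" by simp
      have "0 \<le> 2 * (J u * K u) / (X a u * X a u)"
        using JK[OF u'] \<open>0 < X a u\<close> by (intro divide_nonneg_pos) auto
      hence "0 \<le> 2 * J u / (X a u * X a u) * K u + 2 * J u / (X a u * X a u) * K u"
        unfolding e by simp
      thus "\<exists>y. ((\<lambda>s. K s * K s) has_real_derivative y) (at u) \<and> 0 \<le> y"
        using DERIV_mult[OF dK[OF u'] dK[OF u']] by blast
    qed
    thus ?thesis using K0 by simp
  qed
  have Kpos: "0 < K s" if ss: "0 \<le> s" "s \<le> s0" for s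
  proof (rule ccontr)
    assume "\<not> 0 < K s"
    hence Ks: "K s \<le> 0" by simp
    have cont: "\<forall>u. 0 \<le> u \<and> u \<le> s \<longrightarrow> isCont K u"
    proof (intro allI impI)
      fix u assume "0 \<le> u \<and> u \<le> s"
      hence "0 \<le> u" "u \<le> s0" using ss by auto
      thus "isCont K u" using DERIV_isCont[OF dK] by blast
    qed
    have K0': "0 \<le> K 0" using K0 by simp
    obtain u where u: "0 \<le> u" "u \<le> s" "K u = 0"
      using IVT2[of K s 0 0, OF Ks K0' ss(1) cont] by blast
    have "u \<le> s0" using u(2) ss(2) by linarith
    from KK[OF u(1) this] u(3) show False by simp
  qed
  have "J 0 < J s0"
  proof (rule DERIV_pos_imp_increasing[OF s0])
    fix u assume u: "0 \<le> u" "u \<le> s0"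
    show "\<exists>y. (J has_real_derivative y) (at u) \<and> 0 < y"
      using dJ[OF u] Xp[OF u] Kpos[OF u] by (intro exI[of _ "X a u * K u"]) simp
  qed
  hence "0 < J s0" using J0 by simp
  moreover have "J s0 = P a s0 - X1 a s0 * Q a s0 / X a s0"
    unfolding J_def Nj_def using Xp[of s0] s0 by (simp add: field_simps)
  ultimately show ?thesis unfolding s0_def by simp
qed

end

lemma mvt_any:
  fixes f f' :: "real \<Rightarrow> real"
  assumes d: "\<And>y. (f has_real_derivative f' y) (at y)"
  shows "\<exists>\<xi>. \<bar>\<xi> - x\<bar> \<le> \<bar>y - x\<bar> \<and> f y - f x = (y - x) * f' \<xi>"
proof (cases "x < y")
  case True
  obtain z where "x < z" "z < y" "f y - f x = (y - x) * f' z" using MVT2[OF True d] by blast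
  thus ?thesis by (intro exI[of _ z]) auto
next
  case False
  show ?thesis
  proof (cases "y < x")
    case True
    obtain z where z: "y < z" "z < x" "f x - f y = (x - y) * f' z" using MVT2[OF True d] by blast
    have "f y - f x = (y - x) * f' z" using z(3) by (simp add: algebra_simps)
    thus ?thesis using z by (intro exI[of _ z]) auto
  next
    case False
    hence "y = x" using \<open>\<not> x < y\<close> by simp
    thus ?thesis by (intro exI[of _ x]) auto
  qed
qed

lemma squeeze_lim:
  fixes g f :: "'b \<Rightarrow> real"
  assumes "\<And>a. \<bar>g a - c\<bar> \<le> \<bar>f a - d\<bar>" "(f \<longlongrightarrow> d) F"
  shows "(g \<longlongrightarrow> c) F"
proof -
  have "((\<lambda>a. f a - d) \<longlongrightarrow> 0) F" using assms(2) by (simp add: LIM_zero)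
  hence "((\<lambda>a. norm (f a - d)) \<longlongrightarrow> 0) F" by (rule tendsto_norm_zero)
  hence "((\<lambda>a. g a - c) \<longlongrightarrow> 0) F"
    by (rule Lim_null_comparison[rotated]) (use assms(1) in auto)
  thus ?thesis by (rule LIM_zero_cancel)
qed

context kep begin

lemma X_da_at: "((\<lambda>a. X a s) has_real_derivative P a s) (at a)" using X_da[of s a UNIV] by simp
lemma Th_da_at: "((\<lambda>a. Th a s) has_real_derivative Q a s) (at a)" using Th_da[of s a UNIV] by simp

lemma hit_upper:
  assumes a0: "a0 < vE" and e: "0 < \<epsilon>"
  shows "\<exists>\<delta>>0. \<forall>a. \<bar>a - a0\<bar> < \<delta> \<longrightarrow> a < vE \<longrightarrow> hit a < hit a0 + \<epsilon>"
proof -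
  define s0 where "s0 = hit a0"
  obtain d where d: "d > 0" "\<And>h. h > 0 \<Longrightarrow> h < d \<Longrightarrow> X a0 (s0 + h) < X a0 s0"
    using DERIV_neg_dec_right[OF X_dsa hit_X1[OF a0]] unfolding s0_def by blast
  define h where "h = min \<epsilon> d / 2"
  have h: "0 < h" "h < d" "h < \<epsilon>" unfolding h_def using d e by auto
  have lt: "X a0 (s0 + h) < xB" using d(2)[OF h(1,2)] hit(2)[OF a0] unfolding s0_def by simp
  have ic: "isCont (\<lambda>a. - X a (s0 + h)) a0"
    using DERIV_isCont[OF X_da_at] by (intro continuous_intros) auto
  obtain \<delta> where \<delta>: "\<delta> > 0" "\<And>a. \<bar>a - a0\<bar> < \<delta> \<Longrightarrow> - xB < - X a (s0 + h)"
    using pos_nbhd[OF ic, of "- xB"] lt by auto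
  show ?thesis
  proof (intro exI[of _ \<delta>] conjI allI impI)
    fix a assume a: "\<bar>a - a0\<bar> < \<delta>" "a < vE"
    have Xl: "X a (s0 + h) < xB" using \<delta>(2)[OF a(1)] by simp
    have s0p: "0 < s0" unfolding s0_def using hit(1)[OF a0] .
    show "hit a < hit a0 + \<epsilon>"
    proof (rule ccontr)
      assume "\<not> hit a < hit a0 + \<epsilon>"
      hence "s0 + h < hit a" using h unfolding s0_def by simp
      hence "xB < X a (s0 + h)" using hit(3)[OF a(2), of "s0 + h"] s0p h by simp
      thus False using Xl by simp
    qed
  qed (rule \<delta>(1))
qed

lemma hit_lower:
  assumes a0: "a0 < vE" and e: "0 < \<epsilon>"
  shows "\<exists>\<delta>>0. \<forall>a. \<bar>a - a0\<bar> < \<delta> \<longrightarrow> a < vE \<longrightarrow> hit a0 - \<epsilon> < hit a"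
proof (cases "hit a0 \<le> \<epsilon>")
  case True
  show ?thesis using True hit(1) by (intro exI[of _ 1]) force
next
  case False
  define s0 where "s0 = hit a0"
  define \<sigma> where "\<sigma> = s0 - \<epsilon>"
  have \<sigma>: "0 < \<sigma>" "\<sigma> < s0" unfolding \<sigma>_def s0_def using False e by auto
  have cX: "continuous_on {0..\<sigma>} (\<lambda>u. X a0 u - xB)"
    using continuous_on_subset[OF X_cont] by (intro continuous_intros) auto
  obtain u0 where u0: "u0 \<in> {0..\<sigma>}" "\<And>u. u \<in> {0..\<sigma>} \<Longrightarrow> X a0 u0 - xB \<le> X a0 u - xB"
    using continuous_attains_inf[OF compact_Icc _ cX] \<sigma> by auto
  define m where "m = X a0 u0 - xB"
  have mpos: "0 < m" unfolding m_def using hit(3)[OF a0, of u0] u0 \<sigma> unfolding s0_def by simp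
  let ?box = "cbox (a0 - 1, 0) (a0 + 1, s0) :: (real \<times> real) set"
  have cP: "continuous_on ?box (\<lambda>z. \<bar>P (fst z) (snd z)\<bar>)"
    using continuous_on_subset[OF cont_P] by (intro continuous_intros) auto
  have "(a0, 0) \<in> ?box" using \<sigma> by simp
  hence nbox: "?box \<noteq> {}" by blast
  obtain z0 where z0: "z0 \<in> ?box" "\<And>z. z \<in> ?box \<Longrightarrow> \<bar>P (fst z) (snd z)\<bar> \<le> \<bar>P (fst z0) (snd z0)\<bar>"
    using continuous_attains_sup[OF compact_cbox nbox cP] by auto
  define B where "B = \<bar>P (fst z0) (snd z0)\<bar>"
  have B0: "0 \<le> B" unfolding B_def by simp
  define \<delta> where "\<delta> = min 1 (m / (B + 1))"
  have \<delta>: "0 < \<delta>" unfolding \<delta>_def using mpos B0 by simp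
  show ?thesis
  proof (intro exI[of _ \<delta>] conjI allI impI)
    fix a assume a: "\<bar>a - a0\<bar> < \<delta>" "a < vE"
    have above: "xB < X a u" if u: "u \<in> {0..\<sigma>}" for u
    proof -
      obtain \<xi> where \<xi>: "\<bar>\<xi> - a0\<bar> \<le> \<bar>a - a0\<bar>" "X a u - X a0 u = (a - a0) * P \<xi> u"
        using mvt_any[of "\<lambda>b. X b u" "\<lambda>b. P b u", OF X_da_at, of a0 a] by blast
      have "(\<xi>, u) \<in> ?box" using \<xi>(1) a(1) u \<sigma> unfolding \<delta>_def by auto
      hence PB: "\<bar>P \<xi> u\<bar> \<le> B" using z0(2) unfolding B_def by fastforce
      have "\<bar>X a u - X a0 u\<bar> = \<bar>a - a0\<bar> * \<bar>P \<xi> u\<bar>" using \<xi>(2) by (simp add: abs_mult)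
      also have "\<dots> \<le> \<bar>a - a0\<bar> * B" using PB by (simp add: mult_left_mono)
      also have "\<dots> \<le> \<bar>a - a0\<bar> * (B + 1)" by (simp add: mult_left_mono)
      also have "\<dots> < m / (B + 1) * (B + 1)"
        using a(1) B0 unfolding \<delta>_def by (intro mult_strict_right_mono) auto
      also have "\<dots> = m" using B0 by simp
      finally have "\<bar>X a u - X a0 u\<bar> < m" .
      moreover have "m \<le> X a0 u - xB" unfolding m_def using u0(2)[OF u] .
      ultimately show ?thesis by linarith
    qed
    show "hit a0 - \<epsilon> < hit a"
    proof (rule ccontr)
      assume "\<not> hit a0 - \<epsilon> < hit a"
      hence "hit a \<in> {0..\<sigma>}" using hit(1)[OF a(2)] unfolding \<sigma>_def s0_def by simp
      thus False using above[of "hit a"] hit(2)[OF a(2)] by simp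
    qed
  qed (rule \<delta>)
qed

lemma hit_tendsto:
  assumes a0: "a0 < vE"
  shows "(hit \<longlongrightarrow> hit a0) (at a0)"
  unfolding LIM_eq
proof (intro allI impI)
  fix r :: real assume r: "0 < r"
  obtain d1 where d1: "d1 > 0" "\<And>a. \<bar>a - a0\<bar> < d1 \<Longrightarrow> a < vE \<Longrightarrow> hit a < hit a0 + r"
    using hit_upper[OF a0 r] by blast
  obtain d2 where d2: "d2 > 0" "\<And>a. \<bar>a - a0\<bar> < d2 \<Longrightarrow> a < vE \<Longrightarrow> hit a0 - r < hit a"
    using hit_lower[OF a0 r] by blast
  define d where "d = min (min d1 d2) (vE - a0)"
  have d: "d > 0" unfolding d_def using d1 d2 a0 by simp
  show "\<exists>s>0. \<forall>x. x \<noteq> a0 \<and> norm (x - a0) < s \<longrightarrow> norm (hit x - hit a0) < r"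
  proof (intro exI[of _ d] conjI allI impI)
    fix x assume x: "x \<noteq> a0 \<and> norm (x - a0) < d"
    hence x': "\<bar>x - a0\<bar> < d1" "\<bar>x - a0\<bar> < d2" "x < vE" unfolding d_def by auto
    show "norm (hit x - hit a0) < r" using d1(2)[OF x'(1,3)] d2(2)[OF x'(2,3)] by simp
  qed (rule d)
qed

end

context kep begin

lemma isCont2: "continuous_on UNIV g \<Longrightarrow> isCont g z"
  using continuous_on_eq_continuous_at[OF open_UNIV] by blast

lemma T_deriv:
  assumes a0: "a0 < vE"
  shows "(T has_real_derivative (Q a0 (hit a0) - X a0 (hit a0) * P a0 (hit a0) / X1 a0 (hit a0))) (at a0)"
proof -
  define s0 where "s0 = hit a0"
  define h where "h = hit"
  have ex1: "\<exists>\<xi>. \<bar>\<xi> - a0\<bar> \<le> \<bar>a - a0\<bar> \<and> X a (h a) - X a0 (h a) = (a - a0) * P \<xi> (h a)" for a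
    using mvt_any[of "\<lambda>b. X b (h a)" "\<lambda>b. P b (h a)", OF X_da_at, of a0 a] .
  have ex2: "\<exists>\<eta>. \<bar>\<eta> - s0\<bar> \<le> \<bar>h a - s0\<bar> \<and> X a0 (h a) - X a0 s0 = (h a - s0) * X1 a0 \<eta>" for a
    using mvt_any[of "X a0" "X1 a0", OF X_dsa, of s0 "h a"] .
  have ex3: "\<exists>\<xi>. \<bar>\<xi> - a0\<bar> \<le> \<bar>a - a0\<bar> \<and> Th a (h a) - Th a0 (h a) = (a - a0) * Q \<xi> (h a)" for a
    using mvt_any[of "\<lambda>b. Th b (h a)" "\<lambda>b. Q b (h a)", OF Th_da_at, of a0 a] .
  have ex4: "\<exists>\<eta>. \<bar>\<eta> - s0\<bar> \<le> \<bar>h a - s0\<bar> \<and> Th a0 (h a) - Th a0 s0 = (h a - s0) * X a0 \<eta>" for a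
    using mvt_any[of "Th a0" "X a0", OF Th_dsa, of s0 "h a"] .
  define \<xi>1 where "\<xi>1 a = (SOME \<xi>. \<bar>\<xi> - a0\<bar> \<le> \<bar>a - a0\<bar> \<and> X a (h a) - X a0 (h a) = (a - a0) * P \<xi> (h a))" for a
  define \<eta>1 where "\<eta>1 a = (SOME \<eta>. \<bar>\<eta> - s0\<bar> \<le> \<bar>h a - s0\<bar> \<and> X a0 (h a) - X a0 s0 = (h a - s0) * X1 a0 \<eta>)" for a
  define \<xi>2 where "\<xi>2 a = (SOME \<xi>. \<bar>\<xi> - a0\<bar> \<le> \<bar>a - a0\<bar> \<and> Th a (h a) - Th a0 (h a) = (a - a0) * Q \<xi> (h a))" for a
  define \<eta>2 where "\<eta>2 a = (SOME \<eta>. \<bar>\<eta> - s0\<bar> \<le> \<bar>h a - s0\<bar> \<and> Th a0 (h a) - Th a0 s0 = (h a - s0) * X a0 \<eta>)" for a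
  have p1: "\<bar>\<xi>1 a - a0\<bar> \<le> \<bar>a - a0\<bar>" "X a (h a) - X a0 (h a) = (a - a0) * P (\<xi>1 a) (h a)" for a
    using someI_ex[OF ex1[of a]] unfolding \<xi>1_def by blast+
  have p2: "\<bar>\<eta>1 a - s0\<bar> \<le> \<bar>h a - s0\<bar>" "X a0 (h a) - X a0 s0 = (h a - s0) * X1 a0 (\<eta>1 a)" for a
    using someI_ex[OF ex2[of a]] unfolding \<eta>1_def by blast+
  have p3: "\<bar>\<xi>2 a - a0\<bar> \<le> \<bar>a - a0\<bar>" "Th a (h a) - Th a0 (h a) = (a - a0) * Q (\<xi>2 a) (h a)" for a
    using someI_ex[OF ex3[of a]] unfolding \<xi>2_def by blast+
  have p4: "\<bar>\<eta>2 a - s0\<bar> \<le> \<bar>h a - s0\<bar>" "Th a0 (h a) - Th a0 s0 = (h a - s0) * X a0 (\<eta>2 a)" for a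
    using someI_ex[OF ex4[of a]] unfolding \<eta>2_def by blast+
  have hl: "(h \<longlongrightarrow> s0) (at a0)" unfolding h_def s0_def by (rule hit_tendsto[OF a0])
  have il: "((\<lambda>a. a) \<longlongrightarrow> a0) (at a0)" by (rule tendsto_ident_at)
  have l1: "(\<xi>1 \<longlongrightarrow> a0) (at a0)" by (rule squeeze_lim[OF p1(1) il])
  have l2: "(\<eta>1 \<longlongrightarrow> s0) (at a0)" by (rule squeeze_lim[OF p2(1) hl])
  have l3: "(\<xi>2 \<longlongrightarrow> a0) (at a0)" by (rule squeeze_lim[OF p3(1) il])
  have l4: "(\<eta>2 \<longlongrightarrow> s0) (at a0)" by (rule squeeze_lim[OF p4(1) hl])
  have LP: "((\<lambda>a. P (\<xi>1 a) (h a)) \<longlongrightarrow> P a0 s0) (at a0)"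
    using isCont_tendsto_compose[OF isCont2[OF cont_P, of "(a0, s0)"] tendsto_Pair[OF l1 hl]] by simp
  have LQ: "((\<lambda>a. Q (\<xi>2 a) (h a)) \<longlongrightarrow> Q a0 s0) (at a0)"
    using isCont_tendsto_compose[OF isCont2[OF cont_Q, of "(a0, s0)"] tendsto_Pair[OF l3 hl]] by simp
  have LX1: "((\<lambda>a. X1 a0 (\<eta>1 a)) \<longlongrightarrow> X1 a0 s0) (at a0)"
    by (rule isCont_tendsto_compose[OF X1_isCont l2])
  have LX: "((\<lambda>a. X a0 (\<eta>2 a)) \<longlongrightarrow> X a0 s0) (at a0)"
    by (rule isCont_tendsto_compose[OF X_isCont l4])
  have X1neg: "X1 a0 s0 < 0" unfolding s0_def by (rule hit_X1[OF a0])
  define D where "D = Q a0 s0 - X a0 s0 * P a0 s0 / X1 a0 s0"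
  have LF: "((\<lambda>a. Q (\<xi>2 a) (h a) - X a0 (\<eta>2 a) * P (\<xi>1 a) (h a) / X1 a0 (\<eta>1 a)) \<longlongrightarrow> D) (at a0)"
    unfolding D_def using X1neg by (intro tendsto_intros LQ LX LP LX1) auto
  have ev1: "eventually (\<lambda>a. a < vE) (at a0)"
    using order_tendstoD(2)[OF tendsto_ident_at a0] .
  have ev2: "eventually (\<lambda>a. X1 a0 (\<eta>1 a) < 0) (at a0)"
    using order_tendstoD(2)[OF LX1 X1neg] .
  have ev3: "eventually (\<lambda>a. a \<noteq> a0) (at a0)" unfolding eventually_at by (intro exI[of _ 1]) auto
  have ev: "eventually (\<lambda>a. (T a - T a0) / (a - a0) = Q (\<xi>2 a) (h a) - X a0 (\<eta>2 a) * P (\<xi>1 a) (h a) / X1 a0 (\<eta>1 a)) (at a0)"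
    using ev1 ev2 ev3
  proof eventually_elim
    case (elim a)
    have XB: "X a (h a) = xB" "X a0 s0 = xB" unfolding h_def s0_def using hit(2) elim(1) a0 by auto
    have "0 = (X a (h a) - X a0 (h a)) + (X a0 (h a) - X a0 s0)" using XB by simp
    also have "\<dots> = (a - a0) * P (\<xi>1 a) (h a) + (h a - s0) * X1 a0 (\<eta>1 a)" using p1 p2 by simp
    finally have hs: "h a - s0 = - (a - a0) * P (\<xi>1 a) (h a) / X1 a0 (\<eta>1 a)"
      using elim(2) by (simp add: field_simps)
    have "T a - T a0 = (Th a (h a) - Th a0 (h a)) + (Th a0 (h a) - Th a0 s0)"
      unfolding T_def h_def s0_def by simp
    also have "\<dots> = (a - a0) * Q (\<xi>2 a) (h a) + (h a - s0) * X a0 (\<eta>2 a)" using p3 p4 by simp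
    also have "\<dots> = (a - a0) * (Q (\<xi>2 a) (h a) - X a0 (\<eta>2 a) * P (\<xi>1 a) (h a) / X1 a0 (\<eta>1 a))"
      unfolding hs using elim(2) by (simp add: field_simps)
    finally show ?case using elim(3) by simp
  qed
  have "((\<lambda>a. (T a - T a0) / (a - a0)) \<longlongrightarrow> D) (at a0)"
    using tendsto_cong[OF ev] LF by simp
  thus ?thesis unfolding has_field_derivative_iff D_def s0_def by simp
qed

lemma T_deriv_pos:
  assumes a0: "a0 < vE"
  shows "0 < Q a0 (hit a0) - X a0 (hit a0) * P a0 (hit a0) / X1 a0 (hit a0)"
proof -
  let ?s = "hit a0"
  have X1n: "X1 a0 ?s < 0" by (rule hit_X1[OF a0])
  have XB: "X a0 ?s = xB" by (rule hit(2)[OF a0])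
  have J: "0 < P a0 ?s - X1 a0 ?s * Q a0 ?s / X a0 ?s" by (rule J_pos[OF a0])
  have "Q a0 ?s - X a0 ?s * P a0 ?s / X1 a0 ?s = (- xB / X1 a0 ?s) * (P a0 ?s - X1 a0 ?s * Q a0 ?s / X a0 ?s)"
    using X1n XB xB_pos by (simp add: field_simps)
  moreover have "0 < - xB / X1 a0 ?s" using X1n xB_pos by (simp add: divide_pos_neg)
  hence "0 < (- xB / X1 a0 ?s) * (P a0 ?s - X1 a0 ?s * Q a0 ?s / X a0 ?s)" using J by (rule mult_pos_pos)
  ultimately show ?thesis by simp
qed

end

context kep begin

lemma vs_le:
  assumes a: "a < vE" and t: "t \<in> {0..T a}"
  shows "vs a t \<le> a"
proof -
  note C = canon[OF a]
  have P: "\<And>s. s \<in> {0..T a} \<Longrightarrow> 0 < xs a s \<and> (xs a has_real_derivative vs a s) (at s within {0..T a}) \<and>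
        (vs a has_real_derivative - 1 / (xs a s)\<^sup>2) (at s within {0..T a})"
    using C(1) unfolding line_sol_def by auto
  have "(\<lambda>s. - vs a s) 0 \<le> (\<lambda>s. - vs a s) t"
    by (rule mono_within[where f'="\<lambda>s. 1 / (xs a s)^2" and a=0 and b="T a"])
       (use t P in \<open>auto intro!: derivative_eq_intros\<close>)
  thus ?thesis using C(3) by simp
qed

lemma xs_le:
  assumes a: "a < vE" and t: "t \<in> {0..T a}"
  shows "xs a t - xA \<le> a * t"
proof -
  note C = canon[OF a]
  have P: "\<And>s. s \<in> {0..T a} \<Longrightarrow> 0 < xs a s \<and> (xs a has_real_derivative vs a s) (at s within {0..T a}) \<and>
        (vs a has_real_derivative - 1 / (xs a s)\<^sup>2) (at s within {0..T a})"
    using C(1) unfolding line_sol_def by auto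
  have "(\<lambda>s. a * s - xs a s) 0 \<le> (\<lambda>s. a * s - xs a s) t"
    by (rule mono_within[where f'="\<lambda>s. a - vs a s" and a=0 and b="T a"])
       (use t P vs_le[OF a] in \<open>auto intro!: derivative_eq_intros\<close>)
  thus ?thesis using C(2) by simp
qed

lemma T_upper:
  assumes a: "a < 0"
  shows "T a \<le> (xA - xB) / (- a)"
proof -
  have av: "a < vE" using a vE_pos by simp
  note C = canon[OF av]
  have "xs a (T a) - xA \<le> a * T a" by (rule xs_le[OF av]) (use C(5) in simp)
  hence "(- a) * T a \<le> xA - xB" using C(4) by simp
  thus ?thesis using a by (simp add: field_simps)
qed

lemma T_lower:
  assumes a: "0 < a" "a < vE"
  shows "(2 / (vE^2 - a^2) - xA) / a \<le> T a"
proof -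
  note C = canon[OF a(2)]
  have cv: "continuous_on {0..T a} (vs a)" by (rule line_sol_cont(2)[OF C(1)])
  obtain t1 where t1: "0 \<le> t1" "t1 \<le> T a" "vs a t1 = 0"
    using IVT2'[of "vs a" "T a" 0 0, OF less_imp_le[OF C(6)] _ less_imp_le[OF C(5)] cv] C(3) a by auto
  have t1': "t1 \<in> {0..T a}" using t1 by simp
  have E: "(vs a t1)^2 - 2 / xs a t1 = (vs a 0)^2 - 2 / xs a 0" by (rule line_energy[OF C(1) t1'])
  have xpos: "0 < xs a t1" using C(1) t1' unfolding line_sol_def by auto
  have lt: "a^2 < vE^2" using a by (simp add: power_strict_mono)
  have "- 2 / xs a t1 = a^2 - vE^2" using E C(2,3) t1(3) vE_sq by simp
  hence xt: "xs a t1 = 2 / (vE^2 - a^2)" using xpos lt by (simp add: field_simps)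
  have "xs a t1 - xA \<le> a * t1" by (rule xs_le[OF a(2) t1'])
  also have "\<dots> \<le> a * T a" using a t1 by (simp add: mult_left_mono)
  finally have "2 / (vE^2 - a^2) - xA \<le> a * T a" using xt by simp
  thus ?thesis using a(1) by (simp add: pos_divide_le_eq mult.commute)
qed

lemma T_lim_bot: "(T \<longlongrightarrow> 0) at_bot"
proof (rule tendsto_sandwich[where f="\<lambda>_. 0" and h="\<lambda>a. (xA - xB) / (- a)"])
  show "eventually (\<lambda>a. 0 \<le> T a) at_bot"
    using canon(5) vE_pos by (intro eventually_at_bot_linorderI[of 0]) (auto intro: less_imp_le)
  show "eventually (\<lambda>a. T a \<le> (xA - xB) / (- a)) at_bot"
    using T_upper by (intro eventually_at_bot_linorderI[of "-1"]) auto
  show "((\<lambda>_. 0) \<longlongrightarrow> (0::real)) at_bot" by simp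
  have "filterlim (\<lambda>a::real. - a) at_infinity at_bot"
    by (rule filterlim_at_top_imp_at_infinity[OF filterlim_uminus_at_top_at_bot])
  thus "((\<lambda>a. (xA - xB) / (- a)) \<longlongrightarrow> 0) at_bot"
    by (rule tendsto_divide_0[OF tendsto_const])
qed

lemma T_lim_vE: "filterlim T at_top (at_left vE)"
  unfolding filterlim_at_top
proof
  fix Z :: real
  define R where "R = max 1 (vE * Z + xA)"
  have R: "0 < R" "vE * Z + xA \<le> R" unfolding R_def by auto
  define b where "b = max (vE / 2) (vE - 1 / (R * vE))"
  have b: "b < vE" unfolding b_def using vE_pos R by auto
  show "eventually (\<lambda>a. Z \<le> T a) (at_left vE)"
    unfolding eventually_at_left_field
  proof (intro exI[of _ b] conjI allI impI)
    show "b < vE" by (rule b)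
    fix a assume ab: "b < a" "a < vE"
    have apos: "0 < a" using ab vE_pos unfolding b_def by auto
    have gap: "vE - a < 1 / (R * vE)" using ab unfolding b_def by auto
    have "vE^2 - a^2 = (vE - a) * (vE + a)" by (simp add: power2_eq_square algebra_simps)
    also have "\<dots> \<le> (vE - a) * (2 * vE)" using ab by (intro mult_left_mono) auto
    also have "\<dots> < 1 / (R * vE) * (2 * vE)" using gap vE_pos by (intro mult_strict_right_mono) auto
    also have "\<dots> = 2 / R" using vE_pos by simp
    finally have g: "vE^2 - a^2 < 2 / R" .
    have gpos: "0 < vE^2 - a^2" using ab apos by (simp add: power_strict_mono)
    have "R < 2 / (vE^2 - a^2)" using g gpos R(1) by (simp add: field_simps)
    hence big: "vE * Z \<le> 2 / (vE^2 - a^2) - xA" using R(2) by simp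
    have xAle: "xA \<le> 2 / (vE^2 - a^2)"
    proof -
      have "vE^2 - a^2 \<le> vE^2" by simp
      hence "2 / vE^2 \<le> 2 / (vE^2 - a^2)" using gpos vE_pos by (intro divide_left_mono) (auto intro: mult_pos_pos)
      moreover have "2 / vE^2 = xA" using vE_sq xA_pos by simp
      ultimately show ?thesis by simp
    qed
    have "Z \<le> (2 / (vE^2 - a^2) - xA) / vE" using big vE_pos by (simp add: field_simps)
    also have "\<dots> \<le> (2 / (vE^2 - a^2) - xA) / a" using xAle apos ab by (intro divide_left_mono) auto
    also have "\<dots> \<le> T a" by (rule T_lower[OF apos ab(2)])
    finally show "Z \<le> T a" .
  qed
qed

end

theorem proposition2:
  fixes xA xB vE :: real and e :: "'a::euclidean_space"
  assumes "0 < xB" and "xB < xA"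
    and "vE = sqrt (2 / xA)"
    and "norm e = 1"
  shows
    "(\<forall>vA<vE. 0 < T_DR xA xB vA \<and>
        (\<exists>x v. line_sol x v 0 (T_DR xA xB vA) \<and> x 0 = xA \<and> v 0 = vA
               \<and> x (T_DR xA xB vA) = xB))
   \<and> (\<forall>(q :: real \<Rightarrow> 'a) p tA tB.
        (tA < tB \<and> kepler_sol q p tA tB \<and> q tA = xA *\<^sub>R e \<and> q tB = xB *\<^sub>R e
           \<and> direct_arc q tA tB)
        \<longleftrightarrow>
        (\<exists>vA<vE. tB - tA = T_DR xA xB vA \<and>
           (\<exists>x v. line_sol x v tA tB \<and> x tA = xA \<and> v tA = vA \<and>
                 (\<forall>t\<in>{tA..tB}. q t = x t *\<^sub>R e \<and> p t = v t *\<^sub>R e))))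
   \<and> strict_mono_on {..<vE} (T_DR xA xB)
   \<and> (\<forall>vA<vE. \<exists>D>0. (T_DR xA xB has_real_derivative D) (at vA))
   \<and> (T_DR xA xB \<longlongrightarrow> 0) at_bot
   \<and> filterlim (T_DR xA xB) at_top (at_left vE)"
proof -
  interpret k: kep xA xB using assms(1,2) by unfold_locales
  have vE: "vE = k.vE" using assms(3) unfolding k.vE_def by simp
  have TT: "T_DR xA xB a = k.T a" if "a < vE" for a using k.TDR that vE by simp
  have part1: "\<forall>vA<vE. 0 < T_DR xA xB vA \<and>
        (\<exists>x v. line_sol x v 0 (T_DR xA xB vA) \<and> x 0 = xA \<and> v 0 = vA
               \<and> x (T_DR xA xB vA) = xB)"
  proof (intro allI impI)
    fix vA assume a: "vA < vE"
    hence a': "vA < k.vE" using vE by simp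
    show "0 < T_DR xA xB vA \<and>
        (\<exists>x v. line_sol x v 0 (T_DR xA xB vA) \<and> x 0 = xA \<and> v 0 = vA
               \<and> x (T_DR xA xB vA) = xB)"
      using k.canon[OF a'] TT[OF a] by auto
  qed
  have part2: "\<forall>(q :: real \<Rightarrow> 'a) p tA tB.
        (tA < tB \<and> kepler_sol q p tA tB \<and> q tA = xA *\<^sub>R e \<and> q tB = xB *\<^sub>R e
           \<and> direct_arc q tA tB)
        \<longleftrightarrow>
        (\<exists>vA<vE. tB - tA = T_DR xA xB vA \<and>
           (\<exists>x v. line_sol x v tA tB \<and> x tA = xA \<and> v tA = vA \<and>
                 (\<forall>t\<in>{tA..tB}. q t = x t *\<^sub>R e \<and> p t = v t *\<^sub>R e)))"
  proof (intro allI iffI)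
    fix q :: "real \<Rightarrow> 'a" and p tA tB
    assume H: "tA < tB \<and> kepler_sol q p tA tB \<and> q tA = xA *\<^sub>R e \<and> q tB = xB *\<^sub>R e \<and> direct_arc q tA tB"
    show "\<exists>vA<vE. tB - tA = T_DR xA xB vA \<and>
           (\<exists>x v. line_sol x v tA tB \<and> x tA = xA \<and> v tA = vA \<and>
                 (\<forall>t\<in>{tA..tB}. q t = x t *\<^sub>R e \<and> p t = v t *\<^sub>R e))"
      using k.kep_fwd[OF assms(4)] H vE by auto
  next
    fix q :: "real \<Rightarrow> 'a" and p tA tB
    assume H: "\<exists>vA<vE. tB - tA = T_DR xA xB vA \<and>
           (\<exists>x v. line_sol x v tA tB \<and> x tA = xA \<and> v tA = vA \<and>
                 (\<forall>t\<in>{tA..tB}. q t = x t *\<^sub>R e \<and> p t = v t *\<^sub>R e))"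
    then obtain vA x v where h: "vA < vE" "tB - tA = T_DR xA xB vA" "line_sol x v tA tB" "x tA = xA" "v tA = vA"
      "\<forall>t\<in>{tA..tB}. q t = x t *\<^sub>R e \<and> p t = v t *\<^sub>R e" by blast
    show "tA < tB \<and> kepler_sol q p tA tB \<and> q tA = xA *\<^sub>R e \<and> q tB = xB *\<^sub>R e \<and> direct_arc q tA tB"
      using k.kep_bwd[OF assms(4), of vA tB tA x v q p] h vE by simp
  qed
  have der: "(T_DR xA xB has_real_derivative
      (k.Q a (k.hit a) - k.X a (k.hit a) * k.P a (k.hit a) / k.X1 a (k.hit a))) (at a)" if a: "a < vE" for a
  proof (rule has_field_derivative_transform_within_open[OF k.T_deriv _ _ ])
    show "a < k.vE" using a vE by simp
    show "open {..<vE}" by simp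
    show "a \<in> {..<vE}" using a by simp
    show "\<And>x. x \<in> {..<vE} \<Longrightarrow> k.T x = T_DR xA xB x" using TT by simp
  qed
  have dpos: "0 < k.Q a (k.hit a) - k.X a (k.hit a) * k.P a (k.hit a) / k.X1 a (k.hit a)" if "a < vE" for a
    using k.T_deriv_pos that vE by simp
  have part3: "strict_mono_on {..<vE} (T_DR xA xB)"
  proof (rule strict_mono_onI)
    fix r s assume rs: "r \<in> {..<vE}" "s \<in> {..<vE}" "r < s"
    show "T_DR xA xB r < T_DR xA xB s"
    proof (rule DERIV_pos_imp_increasing[OF rs(3)])
      fix x assume x: "r \<le> x" "x \<le> s"
      hence "x < vE" using rs by simp
      thus "\<exists>y. (T_DR xA xB has_real_derivative y) (at x) \<and> 0 < y" using der dpos by blast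
    qed
  qed
  have part4: "\<forall>vA<vE. \<exists>D>0. (T_DR xA xB has_real_derivative D) (at vA)"
    using der dpos by blast
  have part5: "(T_DR xA xB \<longlongrightarrow> 0) at_bot"
  proof -
    have "eventually (\<lambda>a. k.T a = T_DR xA xB a) at_bot"
      using TT k.vE_pos vE by (intro eventually_at_bot_linorderI[of 0]) auto
    thus ?thesis using k.T_lim_bot tendsto_cong by blast
  qed
  have part6: "filterlim (T_DR xA xB) at_top (at_left vE)"
  proof -
    have "eventually (\<lambda>a. k.T a = T_DR xA xB a) (at_left vE)"
      unfolding eventually_at_left_field using TT by (intro exI[of _ "vE - 1"]) auto
    thus ?thesis using k.T_lim_vE vE filterlim_cong by fastforce
  qed
  show ?thesis using part1 part2 part3 part4 part5 part6 by blast
qed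

end
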